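(* Fix $n\in\mathbb{N}$. Let $(B_1(t))_{t\ge0},\dots,(B_n(t))_{t\ge0}$ be mutually independent, where $B_j$ is the time-inhomogeneous pure birth process started at $B_j(0)=0$ which jumps from $k$ to $k+1$ at instantaneous rate $p_j(t,k)$ at time $t$, with $$p_j(t,k)=\frac{1}{\sum_{\ell=0}^{j-1}t^\ell}\Big[(k+1)\sum_{\ell=0}^{j-2}(\ell+1)t^\ell-j\sum_{\ell=j-k-2}^{j-2}(\ell-j+k+2)t^\ell\Big],\quad 0\le k\le j-1.$$ Let $B(t)=(B_1(t),\dots,B_n(t))$ and $\mathcal{M}^B_t=\Phi(B(t))$. Then $(\mathcal{M}^B_t)_{t\ge0}$ is a regular Mallows process and a càdlàg Markov process.
   Context: $\mathcal{E}_n=\{(I_1,\dots,I_n)\in\mathbb{Z}^n:0\le I_j\le j-1\}$; $\mathrm{Inv}_j(\sigma)=|\{i\in[j-1]:\sigma(i)>\sigma(j)\}|$, $\mathrm{Inv}=\sum_j\mathrm{Inv}_j$. $\Phi:\mathcal{E}_n\to\mathcal{S}_n$ is the unique bijection with $\mathrm{Inv}_j(\Phi(I))=I_j$ for all $j$ (for $k=n,\dots,1$: $[n]\setminus\{\sigma(n),\dots,\sigma(k+1)\}=\{x_1<\dots<x_k\}$, $\sigma(k)=x_{k-I_k}$). Mallows distribution $\pi_{n,q}(\sigma)=q^{\mathrm{Inv}(\sigma)}/\prod_{k=1}^n\sum_{\ell=0}^{k-1}q^\ell$ ($0^0=1$). A Mallows process: $\mathcal{S}_n$-valued càdlàg process with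 $\mathcal{M}_t\sim\pi_{n,t}$ for all $t\ge0$. Regular: each $t\mapsto\mathrm{Inv}_j(\mathcal{M}_t)$ nondecreasing, $\mathrm{Inv}(\mathcal{M}_t)\le\mathrm{Inv}(\mathcal{M}_{t-})+1$ for all $t$, and the processes $(\mathrm{Inv}_j(\mathcal{M}_t))_{t\ge0}$, $j\in[n]$, mutually independent. Empty sums are $0$. *)

theory Defs
  imports "HOL-Probability.Probability" "HOL-Combinatorics.Permutations"
begin

definition Sn :: "nat \<Rightarrow> (nat \<Rightarrow> nat) set" where
  "Sn n = {\<sigma>. \<sigma> permutes {1..n}}"

definition invj :: "nat \<Rightarrow> (nat \<Rightarrow> nat) \<Rightarrow> nat" where
  "invj j \<sigma> = card {i. 1 \<le> i \<and> i < j \<and> \<sigma> j < \<sigma> i}"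

definition Inv :: "nat \<Rightarrow> (nat \<Rightarrow> nat) \<Rightarrow> nat" where
  "Inv n \<sigma> = (\<Sum>j\<in>{1..n}. invj j \<sigma>)"

text \<open>Lehmer-code vectors I = (I_1,...,I_n) are functions nat => nat (only indices 1..n matter).\<close>
definition En :: "nat \<Rightarrow> (nat \<Rightarrow> nat) set" where
  "En n = {I. \<forall>j\<in>{1..n}. I j \<le> j - 1}"

definition Phi :: "nat \<Rightarrow> (nat \<Rightarrow> nat) \<Rightarrow> (nat \<Rightarrow> nat)" where
  "Phi n I = (THE \<sigma>. \<sigma> permutes {1..n} \<and> (\<forall>j\<in>{1..n}. invj j \<sigma> = I j))"

text \<open>Mallows distribution; note 0 ^ 0 = 1 in Isabelle.\<close>
definition mallows :: "nat \<Rightarrow> real \<Rightarrow> (nat \<Rightarrow> nat) \<Rightarrow> real" where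
  "mallows n q \<sigma> = q ^ Inv n \<sigma> / (\<Prod>k\<in>{1..n}. \<Sum>l<k. q ^ l)"

text \<open>Cadlag on [0,oo) for paths with values in a discrete space.\<close>
definition cadlag :: "(real \<Rightarrow> 'b) \<Rightarrow> bool" where
  "cadlag f \<longleftrightarrow> (\<forall>t\<ge>0. (\<exists>e>0. \<forall>u\<in>{t..<t+e}. f u = f t) \<and>
                     (t > 0 \<longrightarrow> (\<exists>c. \<exists>e>0. \<forall>u\<in>{t-e<..<t}. f u = c)))"

definition left_lim :: "(real \<Rightarrow> 'b) \<Rightarrow> real \<Rightarrow> 'b" where
  "left_lim f t = (THE c. \<exists>e>0. \<forall>u\<in>{t-e<..<t}. f u = c)"

definition nat_filt :: "'a measure \<Rightarrow> (real \<Rightarrow> 'a \<Rightarrow> 'b) \<Rightarrow> real \<Rightarrow> 'a set set" where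
  "nat_filt M X s = sigma_sets (space M) {X r -` A \<inter> space M | r A. 0 \<le> r \<and> r \<le> s}"

text \<open>Markov property (w.r.t. the natural filtration) for a process with
  discrete (countable) state space: P(X_t = y | F_s) = P(X_t = y | X_s) a.s.,
  written without conditional expectations.\<close>
definition markov_process :: "'a measure \<Rightarrow> (real \<Rightarrow> 'a \<Rightarrow> 'b) \<Rightarrow> bool" where
  "markov_process M X \<longleftrightarrow>
     (\<forall>t. X t \<in> measurable M (count_space UNIV)) \<and>
     (\<forall>s t. 0 \<le> s \<longrightarrow> s \<le> t \<longrightarrow> (\<forall>A\<in>nat_filt M X s. \<forall>x y.
        measure M (A \<inter> {\<omega>\<in>space M. X s \<omega> = x \<and> X t \<omega> = y}) * measure M {\<omega>\<in>space M. X s \<omega> = x}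
        = measure M (A \<inter> {\<omega>\<in>space M. X s \<omega> = x}) * measure M {\<omega>\<in>space M. X s \<omega> = x \<and> X t \<omega> = y}))"

text \<open>Transition probabilities P(X_t = k + d | X_s = k) of the pure birth process with
  jump rates rate(u,m) (from m to m+1 at time u): solution of the Kolmogorov equations,
  P(s,t,k,k) = exp(-int_s^t rate(u,k) du) and
  P(s,t,k,m+1) = int_s^t P(s,u,k,m) rate(u,m) exp(-int_u^t rate(v,m+1) dv) du.\<close>
primrec btrans :: "(real \<Rightarrow> nat \<Rightarrow> real) \<Rightarrow> real \<Rightarrow> real \<Rightarrow> nat \<Rightarrow> nat \<Rightarrow> real" where
  "btrans rate s t k 0 = exp (- (LBINT u=s..t. rate u k))"
| "btrans rate s t k (Suc d) =
     (LBINT u=s..t. btrans rate s u k d * rate u (k + d) * exp (- (LBINT v=u..t. rate v (k + Suc d))))"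

definition birth_trans :: "(real \<Rightarrow> nat \<Rightarrow> real) \<Rightarrow> real \<Rightarrow> real \<Rightarrow> nat \<Rightarrow> nat \<Rightarrow> real" where
  "birth_trans rate s t k m = (if k \<le> m then btrans rate s t k (m - k) else 0)"

definition birth_process :: "'a measure \<Rightarrow> (real \<Rightarrow> 'a \<Rightarrow> nat) \<Rightarrow> (real \<Rightarrow> nat \<Rightarrow> real) \<Rightarrow> bool" where
  "birth_process M X rate \<longleftrightarrow>
     (\<forall>t. X t \<in> measurable M (count_space UNIV)) \<and>
     (AE \<omega> in M. X 0 \<omega> = 0) \<and>
     (AE \<omega> in M. cadlag (\<lambda>t. X t \<omega>)) \<and>
     (\<forall>s t. 0 \<le> s \<longrightarrow> s \<le> t \<longrightarrow> (\<forall>A\<in>nat_filt M X s. \<forall>k m.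
        measure M (A \<inter> {\<omega>\<in>space M. X s \<omega> = k \<and> X t \<omega> = m})
        = measure M (A \<inter> {\<omega>\<in>space M. X s \<omega> = k}) * birth_trans rate s t k m))"

text \<open>The rates p_j(t,k), for 0 <= k <= j-1 (set to 0 otherwise; irrelevant since p_j(t,j-1) = 0).\<close>
definition prate :: "nat \<Rightarrow> real \<Rightarrow> nat \<Rightarrow> real" where
  "prate j t k = (if k \<le> j - 1 then
     (1 / (\<Sum>l<j. t ^ l)) *
       (real (k + 1) * (\<Sum>l<j - 1. real (l + 1) * t ^ l)
        - real j * (\<Sum>l\<in>{int j - int k - 2 .. int j - 2}. of_int (l - int j + int k + 2) * t powi l))
     else 0)"

definition mallows_process :: "'a measure \<Rightarrow> nat \<Rightarrow> (real \<Rightarrow> 'a \<Rightarrow> (nat \<Rightarrow> nat)) \<Rightarrow> bool" where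
  "mallows_process M n X \<longleftrightarrow>
     (\<forall>t. X t \<in> measurable M (count_space UNIV)) \<and>
     (AE \<omega> in M. \<forall>t\<ge>0. X t \<omega> \<in> Sn n) \<and>
     (AE \<omega> in M. cadlag (\<lambda>t. X t \<omega>)) \<and>
     (\<forall>t\<ge>0. \<forall>\<sigma>\<in>Sn n. measure M {\<omega>\<in>space M. X t \<omega> = \<sigma>} = mallows n t \<sigma>)"

definition regular_mallows_process :: "'a measure \<Rightarrow> nat \<Rightarrow> (real \<Rightarrow> 'a \<Rightarrow> (nat \<Rightarrow> nat)) \<Rightarrow> bool" where
  "regular_mallows_process M n X \<longleftrightarrow>
     mallows_process M n X \<and>
     (\<forall>j\<in>{1..n}. AE \<omega> in M. mono_on {0..} (\<lambda>t. invj j (X t \<omega>))) \<and>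
     (AE \<omega> in M. \<forall>t>0. Inv n (X t \<omega>) \<le> Inv n (left_lim (\<lambda>u. X u \<omega>) t) + 1) \<and>
     prob_space.indep_vars M (\<lambda>_. Pi\<^sub>M {0..} (\<lambda>_. count_space UNIV))
        (\<lambda>j \<omega>. restrict (\<lambda>t. invj j (X t \<omega>)) {0..}) {1..n}"

end

theory Submission
  imports Defs
begin


lemma invj_le: "invj j \<sigma> \<le> j - 1"
proof -
  have "{i. 1 \<le> i \<and> i < j \<and> \<sigma> j < \<sigma> i} \<subseteq> {1..<j}" by auto
  hence "invj j \<sigma> \<le> card {1..<j::nat}" unfolding invj_def by (intro card_mono) auto
  thus ?thesis by simp
qed

lemma Phi_cong: "(\<And>j. j \<in> {1..n} \<Longrightarrow> I j = I' j) \<Longrightarrow> Phi n I = Phi n I'"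
  unfolding Phi_def by (intro arg_cong[where f=The] ext) auto

lemma invj_image:
  assumes "inj_on \<sigma> {1..j}" "j \<ge> 1"
  shows "invj j \<sigma> = card {x \<in> \<sigma> ` {1..j}. \<sigma> j < x}"
proof -
  have "{x \<in> \<sigma> ` {1..j}. \<sigma> j < x} = \<sigma> ` {i. 1 \<le> i \<and> i < j \<and> \<sigma> j < \<sigma> i}"
  proof (intro equalityI subsetI)
    fix x assume "x \<in> {x \<in> \<sigma> ` {1..j}. \<sigma> j < x}"
    then obtain i where i: "i \<in> {1..j}" "x = \<sigma> i" "\<sigma> j < \<sigma> i" by auto
    hence "i \<noteq> j" by auto
    hence "i < j" using i by auto
    thus "x \<in> \<sigma> ` {i. 1 \<le> i \<and> i < j \<and> \<sigma> j < \<sigma> i}" using i by auto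
  qed auto
  moreover have "inj_on \<sigma> {i. 1 \<le> i \<and> i < j \<and> \<sigma> j < \<sigma> i}"
    using assms(1) by (rule inj_on_subset) auto
  ultimately show ?thesis unfolding invj_def by (simp add: card_image)
qed

lemma invj_inj:
  assumes s: "\<sigma> permutes {1..n}" and t: "\<tau> permutes {1..n}"
    and eq: "\<forall>j\<in>{1..n}. invj j \<sigma> = invj j \<tau>"
  shows "\<sigma> = \<tau>"
proof (rule ccontr)
  assume ne: "\<sigma> \<noteq> \<tau>"
  define D where "D = {j\<in>{1..n}. \<sigma> j \<noteq> \<tau> j}"
  have "D \<noteq> {}"
  proof
    assume "D = {}"
    have "\<forall>j. \<sigma> j = \<tau> j"
    proof
      fix x show "\<sigma> x = \<tau> x"
      proof (cases "x \<in> {1..n}")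
        case True thus ?thesis using \<open>D = {}\<close> unfolding D_def by blast
      next
        case False thus ?thesis using permutes_not_in[OF s False] permutes_not_in[OF t False] by simp
      qed
    qed
    thus False using ne by auto
  qed
  define j where "j = Max D"
  have fD: "finite D" unfolding D_def by auto
  have jD: "j \<in> D" using fD \<open>D \<noteq> {}\<close> unfolding j_def by auto
  have above: "\<And>i. i \<in> {j+1..n} \<Longrightarrow> \<sigma> i = \<tau> i"
  proof (rule ccontr)
    fix i assume i: "i \<in> {j+1..n}" "\<sigma> i \<noteq> \<tau> i"
    hence "i \<in> D" using jD unfolding D_def by auto
    hence "i \<le> j" using fD unfolding j_def by auto
    thus False using i by auto
  qed
  have j1: "1 \<le> j" "j \<le> n" using jD unfolding D_def by auto
  have split: "{1..n} = {1..j} \<union> {j+1..n}" "{1..j} \<inter> {j+1..n} = {}" using j1 by auto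
  have injs: "inj_on \<sigma> {1..n}" "inj_on \<tau> {1..n}" using s t permutes_inj_on by blast+
  have Rs: "\<sigma> ` {1..j} = {1..n} - \<sigma> ` {j+1..n}"
  proof -
    have "\<sigma> ` {1..n} = {1..n}" using s by (rule permutes_image)
    hence "{1..n} - \<sigma> ` {j+1..n} = \<sigma> ` {1..n} - \<sigma> ` {j+1..n}" by simp
    also have "\<dots> = \<sigma> ` ({1..n} - {j+1..n})" using injs(1) by (intro inj_on_image_set_diff[symmetric]) auto
    also have "{1..n} - {j+1..n} = {1..j}" using j1 by auto
    finally show ?thesis by simp
  qed
  have Rt: "\<tau> ` {1..j} = {1..n} - \<tau> ` {j+1..n}"
  proof -
    have "\<tau> ` {1..n} = {1..n}" using t by (rule permutes_image)
    hence "{1..n} - \<tau> ` {j+1..n} = \<tau> ` {1..n} - \<tau> ` {j+1..n}" by simp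
    also have "\<dots> = \<tau> ` ({1..n} - {j+1..n})" using injs(2) by (intro inj_on_image_set_diff[symmetric]) auto
    also have "{1..n} - {j+1..n} = {1..j}" using j1 by auto
    finally show ?thesis by simp
  qed
  have "\<sigma> ` {j+1..n} = \<tau> ` {j+1..n}" using above by (auto simp: image_iff)
  hence R: "\<sigma> ` {1..j} = \<tau> ` {1..j}" using Rs Rt by simp
  define R where "R = \<sigma> ` {1..j}"
  have fR: "finite R" unfolding R_def by auto
  have i1: "invj j \<sigma> = card {x \<in> R. \<sigma> j < x}" unfolding R_def
    by (rule invj_image[OF inj_on_subset[OF injs(1)] j1(1)]) (use j1 in auto)
  have i2: "invj j \<tau> = card {x \<in> R. \<tau> j < x}" unfolding R_def R
    by (rule invj_image[OF inj_on_subset[OF injs(2)] j1(1)]) (use j1 in auto)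
  have sR1: "\<sigma> j \<in> R" unfolding R_def using j1 by auto
  have "\<tau> j \<in> \<tau> ` {1..j}" using j1 by auto
  hence sR2: "\<tau> j \<in> R" unfolding R_def R .
  note sR = sR1 sR2
  have neq: "\<sigma> j \<noteq> \<tau> j" using jD unfolding D_def by auto
  have lt: "\<And>a b. a \<in> R \<Longrightarrow> b \<in> R \<Longrightarrow> a < b \<Longrightarrow> card {x \<in> R. b < x} < card {x \<in> R. a < x}"
    by (rule psubset_card_mono) (use fR in auto)
  have "invj j \<sigma> = invj j \<tau>" using eq j1 by auto
  thus False using lt[OF sR] lt[OF sR(2) sR(1)] neq i1 i2 by (cases "\<sigma> j < \<tau> j") auto
qed

definition code :: "nat \<Rightarrow> (nat \<Rightarrow> nat) \<Rightarrow> (nat \<Rightarrow> nat)" where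
  "code n \<sigma> = restrict (\<lambda>j. invj j \<sigma>) {1..n}"

lemma code_bij: "bij_betw (code n) (Sn n) (PiE {1..n} (\<lambda>j. {..<j}))"
proof -
  have inj: "inj_on (code n) (Sn n)"
  proof
    fix \<sigma> \<tau> assume "\<sigma> \<in> Sn n" "\<tau> \<in> Sn n" "code n \<sigma> = code n \<tau>"
    hence "\<forall>j\<in>{1..n}. invj j \<sigma> = invj j \<tau>"
    proof (intro ballI)
      fix j assume ceq: "code n \<sigma> = code n \<tau>" and jn: "j \<in> {1..n}"
      show "invj j \<sigma> = invj j \<tau>" using fun_cong[OF ceq, of j] jn by (simp add: code_def)
    qed
    thus "\<sigma> = \<tau>" using \<open>\<sigma> \<in> Sn n\<close> \<open>\<tau> \<in> Sn n\<close> invj_inj[of \<sigma> n \<tau>] unfolding Sn_def by simp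
  qed
  have sub: "code n ` Sn n \<subseteq> PiE {1..n} (\<lambda>j. {..<j})"
  proof
    fix x assume "x \<in> code n ` Sn n"
    then obtain \<sigma> where x: "x = code n \<sigma>" by auto
    have "\<And>j. j \<in> {1..n} \<Longrightarrow> invj j \<sigma> < j"
    proof -
      fix j :: nat assume "j \<in> {1..n}"
      hence "1 \<le> j" by auto
      moreover have "invj j \<sigma> \<le> j - 1" by (rule invj_le)
      ultimately show "invj j \<sigma> < j" by arith
    qed
    thus "x \<in> PiE {1..n} (\<lambda>j. {..<j})" unfolding x code_def restrict_PiE_iff by simp
  qed
  have c1: "card (Sn n) = fact n" unfolding Sn_def using card_permutations[of "{1..n}" n] by auto
  have c2: "card (PiE {1..n} (\<lambda>j. {..<j::nat})) = fact n"
  proof -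
    have "card (PiE {1..n} (\<lambda>j. {..<j::nat})) = (\<Prod>j\<in>{1..n}. card {..<j})"
      by (rule card_PiE) simp
    also have "\<dots> = (\<Prod>j\<in>{1..n}. j)" by simp
    also have "\<dots> = fact n" by (simp add: fact_prod)
    finally show ?thesis .
  qed
  have "card (code n ` Sn n) = card (PiE {1..n} (\<lambda>j. {..<j}))"
    using c1 c2 inj by (simp add: card_image)
  hence "code n ` Sn n = PiE {1..n} (\<lambda>j. {..<j})"
    by (intro card_subset_eq sub) (auto intro!: finite_PiE)
  thus ?thesis using inj unfolding bij_betw_def by simp
qed

lemma Phi_props:
  assumes "\<forall>j\<in>{1..n}. I j \<le> j - 1"
  shows "Phi n I \<in> Sn n" "\<forall>j\<in>{1..n}. invj j (Phi n I) = I j"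
proof -
  define I' where "I' = restrict I {1..n}"
  have "\<forall>j\<in>{1..n}. I j < j"
  proof
    fix j assume "j \<in> {1..n}"
    with assms have "I j \<le> j - 1" "1 \<le> j" by auto
    thus "I j < j" by arith
  qed
  hence "I' \<in> PiE {1..n} (\<lambda>j. {..<j})" unfolding I'_def restrict_PiE_iff by simp
  hence "I' \<in> code n ` Sn n" using code_bij[of n] unfolding bij_betw_def by simp
  then obtain \<sigma> where s: "\<sigma> \<in> Sn n" "code n \<sigma> = I'" by (elim imageE) simp
  have P: "\<sigma> permutes {1..n} \<and> (\<forall>j\<in>{1..n}. invj j \<sigma> = I j)"
  proof (intro conjI ballI)
    show "\<sigma> permutes {1..n}" using s unfolding Sn_def by simp
    fix j assume j: "j \<in> {1..n}"
    thus "invj j \<sigma> = I j" using fun_cong[OF s(2), of j] by (simp add: code_def I'_def)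
  qed
  have "Phi n I = \<sigma>" unfolding Phi_def
  proof (rule the_equality)
    show "\<sigma> permutes {1..n} \<and> (\<forall>j\<in>{1..n}. invj j \<sigma> = I j)" by fact
    fix \<tau> assume "\<tau> permutes {1..n} \<and> (\<forall>j\<in>{1..n}. invj j \<tau> = I j)"
    thus "\<tau> = \<sigma>" using P invj_inj[of \<tau> n \<sigma>] by auto
  qed
  thus "Phi n I \<in> Sn n" "\<forall>j\<in>{1..n}. invj j (Phi n I) = I j" using P s by auto
qed

lemma Phi_code: "\<sigma> \<in> Sn n \<Longrightarrow> Phi n (\<lambda>j. invj j \<sigma>) = \<sigma>"
  unfolding Phi_def Sn_def
proof (rule the_equality)
  fix \<tau> assume "\<sigma> \<in> {\<sigma>. \<sigma> permutes {1..n}}" "\<tau> permutes {1..n} \<and> (\<forall>j\<in>{1..n}. invj j \<tau> = invj j \<sigma>)"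
  thus "\<tau> = \<sigma>" using invj_inj[of \<tau> n \<sigma>] by simp
qed simp


definition Zp :: "nat \<Rightarrow> real \<Rightarrow> real" where "Zp j t = (\<Sum>l<j. t ^ l)"
definition Zd :: "nat \<Rightarrow> real \<Rightarrow> real" where "Zd j t = (\<Sum>l<j - 1. real (l + 1) * t ^ l)"
definition Wp :: "nat \<Rightarrow> nat \<Rightarrow> real \<Rightarrow> real" where
  "Wp j k t = (\<Sum>i\<le>k. real i * t ^ ((j + i) - (k + 2)))"
definition Np :: "nat \<Rightarrow> nat \<Rightarrow> real \<Rightarrow> real" where
  "Np j k t = real (k + 1) * Zd j t - real j * Wp j k t"

lemma Zp_Suc: "Zp (Suc j) t = Zp j t + t ^ j" by (simp add: Zp_def)
lemma Zd_Suc: "Zd (Suc j) t = Zd j t + real j * t ^ (j - 1)"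
proof (cases j)
  case 0 thus ?thesis by (simp add: Zd_def)
next
  case (Suc m) thus ?thesis by (simp add: Zd_def)
qed

lemma Zp_ge1: "t \<ge> 0 \<Longrightarrow> j \<ge> 1 \<Longrightarrow> Zp j t \<ge> 1"
proof (induction j)
  case 0 thus ?case by simp
next
  case (Suc j)
  show ?case
  proof (cases "j = 0")
    case True thus ?thesis by (simp add: Zp_def)
  next
    case False
    hence "Zp j t \<ge> 1" using Suc by simp
    moreover have "t ^ j \<ge> 0" using Suc by simp
    ultimately show ?thesis by (simp add: Zp_Suc)
  qed
qed

lemma Zp_deriv: "(Zp j has_real_derivative Zd j t) (at t)"
proof (induction j)
  case 0 show ?case by (simp add: Zp_def Zd_def)
next
  case (Suc j)
  have "((\<lambda>t. t ^ j) has_real_derivative real j * t ^ (j - 1)) (at t)"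
    using DERIV_pow[of j t] by simp
  from DERIV_add[OF Suc this] show ?case
    by (simp add: Zp_Suc[abs_def] Zd_Suc)
qed

lemma L1: "j \<ge> 1 \<Longrightarrow> (t - 1) * Zd j t + Zp j t = real j * t ^ (j - 1)"
proof (induction j)
  case 0 thus ?case by simp
next
  case (Suc j)
  show ?case
  proof (cases "j = 0")
    case True thus ?thesis by (simp add: Zd_def Zp_def)
  next
    case False
    hence IH: "(t - 1) * Zd j t + Zp j t = real j * t ^ (j - 1)" using Suc by simp
    have tj: "t ^ j = t * t ^ (j - 1)" using False by (metis Suc_pred' neq0_conv power_Suc)
    show ?thesis unfolding Zd_Suc Zp_Suc using IH tj by (simp add: algebra_simps)
  qed
qed

lemma L2:
  assumes "k + 2 \<le> j"
  shows "t * Wp j (Suc k) t - Wp j k t = real (k + 1) * t ^ (j - 1)"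
proof -
  have "t * Wp j (Suc k) t = (\<Sum>i\<le>Suc k. real i * t ^ ((j + i) - (k + 2)))"
    unfolding Wp_def sum_distrib_left
  proof (rule sum.cong[OF refl])
    fix i assume "i \<in> {..Suc k}"
    show "t * (real i * t ^ (j + i - (Suc k + 2))) = real i * t ^ (j + i - (k + 2))"
    proof (cases "i = 0")
      case True thus ?thesis by simp
    next
      case False
      hence "j + i - (k + 2) = Suc (j + i - (Suc k + 2))" using assms by simp
      thus ?thesis by simp
    qed
  qed
  also have "\<dots> = Wp j k t + real (Suc k) * t ^ ((j + Suc k) - (k + 2))"
    unfolding Wp_def by simp
  also have "(j + Suc k) - (k + 2) = j - 1" by simp
  finally show ?thesis by simp
qed

lemma key_step:
  assumes "k + 2 \<le> j"
  shows "t ^ Suc k * Np j (Suc k) t - t ^ k * Np j k t = t ^ Suc k * Zd j t - real (k + 1) * t ^ k * Zp j t"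
proof -
  have j1: "j \<ge> 1" using assms by simp
  have e1: "Zp j t = real j * t ^ (j - 1) - (t - 1) * Zd j t" using L1[OF j1, of t] by simp
  have e2: "Wp j k t = t * Wp j (Suc k) t - real (k + 1) * t ^ (j - 1)" using L2[OF assms, of t] by simp
  show ?thesis unfolding Np_def e1 e2 by (simp add: algebra_simps)
qed

lemma Np0: "Np j 0 t = Zd j t" by (simp add: Np_def Wp_def)

lemma prate_eq:
  assumes "1 \<le> j" "k \<le> j - 1"
  shows "prate j t k = Np j k t / Zp j t"
proof -
  have S: "(\<Sum>l\<in>{int j - int k - 2 .. int j - 2}. of_int (l - int j + int k + 2) * t powi l) = Wp j k t"
  proof -
    have "(\<Sum>l\<in>{int j - int k - 2 .. int j - 2}. of_int (l - int j + int k + 2) * t powi l)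
        = (\<Sum>i\<le>k. of_int (int i) * t powi (int j - int k - 2 + int i))"
    proof (rule sum.reindex_bij_witness[of _ "\<lambda>i. int j - int k - 2 + int i" "\<lambda>l. nat (l - (int j - int k - 2))"])
      fix l assume "l \<in> {int j - int k - 2 .. int j - 2}"
      thus "int j - int k - 2 + int (nat (l - (int j - int k - 2))) = l" by simp
      from \<open>l \<in> _\<close> show "nat (l - (int j - int k - 2)) \<in> {..k}" by auto
      from \<open>l \<in> _\<close> show "of_int (int (nat (l - (int j - int k - 2)))) * t powi (int j - int k - 2 + int (nat (l - (int j - int k - 2))))
          = of_int (l - int j + int k + 2) * t powi l" by simp
    next
      fix i assume "i \<in> {..k}"
      thus "nat (int j - int k - 2 + int i - (int j - int k - 2)) = i" by simp
      from \<open>i \<in> _\<close> show "int j - int k - 2 + int i \<in> {int j - int k - 2 .. int j - 2}" by auto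
    qed
    also have "\<dots> = Wp j k t" unfolding Wp_def
    proof (rule sum.cong[OF refl])
      fix i assume "i \<in> {..k}"
      show "of_int (int i) * t powi (int j - int k - 2 + int i) = real i * t ^ (j + i - (k + 2))"
      proof (cases "i = 0")
        case True thus ?thesis by simp
      next
        case False
        hence eq: "int j - int k - 2 + int i = int (j + i - (k + 2))" using assms by simp
        have "t powi (int j - int k - 2 + int i) = t powi int (j + i - (k + 2))" by (simp only: eq)
        also have "\<dots> = t ^ (j + i - (k + 2))" by (rule power_int_of_nat)
        finally show ?thesis by simp
      qed
    qed
    finally show ?thesis .
  qed
  show ?thesis unfolding prate_def using assms S by (simp add: Np_def Zp_def Zd_def)
qed

lemma Zp_0: "j \<ge> 1 \<Longrightarrow> Zp j 0 = 1"
proof (induction j)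
  case 0 thus ?case by simp
next
  case (Suc j) thus ?case by (cases "j = 0") (simp_all add: Zp_Suc Zp_def)
qed

lemma prate_cont:
  assumes "1 \<le> j" "k \<le> j - 1"
  shows "continuous_on {0..T} (\<lambda>u. prate j u k)"
proof -
  have c1: "continuous_on {0..T} (Np j k)" unfolding Np_def[abs_def] Zd_def Wp_def by (intro continuous_intros)
  have c2: "continuous_on {0..T} (Zp j)" unfolding Zp_def[abs_def] by (intro continuous_intros)
  have "continuous_on {0..T} (\<lambda>u. Np j k u / Zp j u)"
    by (rule continuous_on_divide[OF c1 c2]) (use Zp_ge1[of _ j] assms in fastforce)
  thus ?thesis using prate_eq[OF assms] by simp
qed

lemma pi_deriv:
  assumes "k + 2 \<le> j" "t \<ge> 0"
  shows "((\<lambda>u. u ^ Suc k / Zp j u) has_real_derivative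
           (prate j t k * (t ^ k / Zp j t) - prate j t (Suc k) * (t ^ Suc k / Zp j t))) (at t)"
proof -
  have Z: "Zp j t \<ge> 1" using Zp_ge1[of t j] assms by auto
  have d: "((\<lambda>u. u ^ Suc k / Zp j u) has_real_derivative
     ((real (Suc k) * t ^ k) * Zp j t - t ^ Suc k * Zd j t) / (Zp j t * Zp j t)) (at t)"
  proof (rule DERIV_divide[OF _ Zp_deriv])
    show "((\<lambda>u. u ^ Suc k) has_real_derivative real (Suc k) * t ^ k) (at t)"
      using DERIV_pow[of "Suc k" t] by simp
  qed (use Z in auto)
  have ks: "t ^ Suc k * Np j (Suc k) t - t ^ k * Np j k t = t ^ Suc k * Zd j t - real (k + 1) * t ^ k * Zp j t"
    by (rule key_step[OF assms(1)])
  have p1: "prate j t k = Np j k t / Zp j t" by (rule prate_eq) (use assms in auto)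
  have p2: "prate j t (Suc k) = Np j (Suc k) t / Zp j t" by (rule prate_eq) (use assms in auto)
  have "((real (Suc k) * t ^ k) * Zp j t - t ^ Suc k * Zd j t) / (Zp j t * Zp j t)
      = prate j t k * (t ^ k / Zp j t) - prate j t (Suc k) * (t ^ Suc k / Zp j t)"
    unfolding p1 p2 using Z ks by (simp add: field_simps)
  thus ?thesis using d by (rule DERIV_cong[rotated])
qed

lemma btrans_marg:
  assumes j: "1 \<le> j"
  shows "k \<le> j - 1 \<Longrightarrow> t \<ge> 0 \<Longrightarrow> btrans (prate j) 0 t 0 k = t ^ k / Zp j t"
proof (induction k arbitrary: t)
  case 0
  have cont: "continuous_on {min 0 t..max 0 t} (\<lambda>u. prate j u 0)"
    using prate_cont[OF j, of 0 t] 0 by simp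
  have der: "((\<lambda>u. ln (Zp j u)) has_vector_derivative prate j x 0) (at x within {min 0 t..max 0 t})"
    if x: "min 0 t \<le> x" "x \<le> max 0 t" for x
  proof -
    have Z: "Zp j x \<ge> 1" using Zp_ge1[of x j] x j 0 by auto
    have "((\<lambda>u. ln (Zp j u)) has_real_derivative (1 / Zp j x) * Zd j x) (at x)"
      by (rule DERIV_chain2[OF DERIV_ln_divide Zp_deriv]) (use Z in auto)
    moreover have "(1 / Zp j x) * Zd j x = prate j x 0" using prate_eq[OF j, of 0 x] by (simp add: Np0)
    ultimately have "((\<lambda>u. ln (Zp j u)) has_real_derivative prate j x 0) (at x)" by simp
    thus ?thesis by (simp add: has_real_derivative_iff_has_vector_derivative[symmetric] has_field_derivative_at_within)
  qed
  have "(LBINT u=0..t. prate j u 0) = ln (Zp j t) - ln (Zp j 0)"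
    using interval_integral_FTC_finite[OF cont der] by (simp add: zero_ereal_def)
  hence I: "(LBINT u=0..t. prate j u 0) = ln (Zp j t)" using Zp_0[OF j] by simp
  have Z: "Zp j t \<ge> 1" using Zp_ge1[of t j] j 0 by auto
  show ?case using Z I by (simp add: exp_minus zero_ereal_def divide_inverse)
next
  case (Suc k)
  have t: "t \<ge> 0" by fact
  have kj: "k + 2 \<le> j" using Suc.prems j by simp
  have IH: "\<And>u. u \<ge> 0 \<Longrightarrow> btrans (prate j) 0 u 0 k = u ^ k / Zp j u" using Suc by simp
  define G where "G u = interval_lebesgue_integral lborel (ereal 0) (ereal u) (\<lambda>v. prate j v (Suc k))" for u
  have cont1: "continuous_on {0..t} (\<lambda>v. prate j v (Suc k))" by (rule prate_cont) (use kj j in auto)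
  have cont0: "continuous_on {0..t} (\<lambda>v. prate j v k)" by (rule prate_cont) (use kj j in auto)
  have Gder: "(G has_vector_derivative prate j x (Suc k)) (at x within {0..t})" if "x \<in> {0..t}" for x
    unfolding G_def[abs_def] by (rule interval_integral_FTC2) (use that t cont1 in auto)
  have Gcont: "continuous_on {0..t} G"
    using Gder has_vector_derivative_continuous continuous_on_eq_continuous_within by blast
  have inner: "(LBINT v=u..t. prate j v (Suc k)) = G t - G u" if u: "u \<in> {0..t}" for u
  proof (rule interval_integral_FTC_finite)
    show "continuous_on {min u t..max u t} (\<lambda>v. prate j v (Suc k))"
      using u by (intro continuous_on_subset[OF cont1]) auto
    fix x assume "min u t \<le> x" "x \<le> max u t"
    hence x: "x \<in> {0..t}" "{min u t..max u t} \<subseteq> {0..t}" using u by auto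
    show "(G has_vector_derivative prate j x (Suc k)) (at x within {min u t..max u t})"
      by (rule has_vector_derivative_within_subset[OF Gder[OF x(1)] x(2)])
  qed
  define f where "f u = u ^ k / Zp j u * prate j u k * exp (G u - G t)" for u
  define H where "H u = u ^ Suc k / Zp j u * exp (G u - G t)" for u
  have "btrans (prate j) 0 t 0 (Suc k) =
      interval_lebesgue_integral lborel (ereal 0) (ereal t) (\<lambda>u. btrans (prate j) 0 u 0 k * prate j u k * exp (- (LBINT v=u..t. prate j v (Suc k))))"
    by (simp add: zero_ereal_def)
  also have "\<dots> = interval_lebesgue_integral lborel (ereal 0) (ereal t) f"
  proof (rule interval_integral_cong, goal_cases)
    case (1 x)
    hence x: "0 < x" "x < t" using t by (auto simp: einterval_iff min_def max_def split: if_splits)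
    show ?case unfolding f_def using x by (simp add: IH inner)
  qed
  also have "\<dots> = H t - H 0"
  proof (rule interval_integral_FTC_finite)
    have c2: "continuous_on {0..t} (Zp j)" unfolding Zp_def[abs_def] by (intro continuous_intros)
    have c3: "continuous_on {0..t} (\<lambda>u. u ^ k)" by (intro continuous_intros)
    have Zc: "continuous_on {0..t} (\<lambda>u. u ^ k / Zp j u)"
      by (rule continuous_on_divide[OF c3 c2]) (use Zp_ge1[of _ j] j in fastforce)
    show "continuous_on {min 0 t..max 0 t} f"
      unfolding f_def[abs_def] using t by (simp, intro continuous_intros c2 cont0 Gcont) (use Zp_ge1[of _ j] j in fastforce)
    fix x assume "min 0 t \<le> x" "x \<le> max 0 t"
    hence x: "x \<in> {0..t}" using t by auto
    have Z: "Zp j x \<ge> 1" using Zp_ge1[of x j] x j by auto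
    have d1: "((\<lambda>u. u ^ Suc k / Zp j u) has_real_derivative
           (prate j x k * (x ^ k / Zp j x) - prate j x (Suc k) * (x ^ Suc k / Zp j x))) (at x within {0..t})"
      using pi_deriv[OF kj, of x] x has_field_derivative_at_within by auto
    have d2: "((\<lambda>u. exp (G u - G t)) has_real_derivative exp (G x - G t) * prate j x (Suc k)) (at x within {0..t})"
    proof -
      have "(G has_real_derivative prate j x (Suc k)) (at x within {0..t})"
        using Gder[OF x] by (simp add: has_real_derivative_iff_has_vector_derivative)
      hence "((\<lambda>u. G u - G t) has_real_derivative prate j x (Suc k)) (at x within {0..t})"
        by (auto intro!: derivative_eq_intros)
      thus ?thesis by (rule DERIV_chain2[OF DERIV_exp])
    qed
    have "(H has_real_derivative f x) (at x within {0..t})"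
      unfolding H_def[abs_def] f_def by (rule DERIV_cong[OF DERIV_mult[OF d1 d2]]) (simp add: algebra_simps)
    thus "(H has_vector_derivative f x) (at x within {min 0 t..max 0 t})"
      using t by (simp add: has_real_derivative_iff_has_vector_derivative)
  qed
  also have "H t - H 0 = t ^ Suc k / Zp j t" unfolding H_def by simp
  finally show ?case .
qed


lemma LBINT_bound:
  fixes g :: "real \<Rightarrow> real"
  assumes ab: "a \<le> b" and R: "R \<ge> 0" and g: "\<And>x. x \<in> {a..b} \<Longrightarrow> \<bar>g x\<bar> \<le> R"
  shows "\<bar>LBINT x=a..b. g x\<bar> \<le> R * (b - a)"
proof -
  have "(LBINT x=a..b. g x) = (\<integral>x. indicator {a..b} x * g x \<partial>lborel)"
    using ab by (simp add: interval_integral_Icc set_lebesgue_integral_def)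
  hence "\<bar>LBINT x=a..b. g x\<bar> \<le> (\<integral>x. norm (indicator {a..b} x * g x) \<partial>lborel)"
    using integral_norm_bound[of lborel "\<lambda>x. indicator {a..b} x * g x"] by simp
  also have "\<dots> \<le> (\<integral>x. R * indicator {a..b} x \<partial>lborel)"
  proof (rule integral_mono')
    show "integrable lborel (\<lambda>x. R * indicator {a..b} x)"
      by (intro integrable_mult_right integrable_real_indicator) (auto simp: emeasure_lborel_Icc_eq)
    fix x :: real
    show "norm (indicator {a..b} x * g x) \<le> R * indicator {a..b} x"
      using g[of x] by (cases "x \<in> {a..b}") auto
    show "0 \<le> R * indicator {a..b} x" using R by simp
  qed
  also have "\<dots> = R * (b - a)" using ab by simp
  finally show ?thesis .
qed

lemma exp_LBINT_bound:
  fixes a b R :: real and g :: "real \<Rightarrow> real"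
  assumes "a \<le> b" "R \<ge> 0" "\<And>x. x \<in> {a..b} \<Longrightarrow> \<bar>g x\<bar> \<le> R" "R * (b - a) \<le> 1"
  shows "\<bar>exp (- (LBINT x=a..b. g x))\<bar> \<le> exp 1"
proof -
  have "\<bar>LBINT x=a..b. g x\<bar> \<le> R * (b - a)" by (rule LBINT_bound) (use assms in auto)
  hence "- (LBINT x=a..b. g x) \<le> 1" using assms(4) by linarith
  thus ?thesis by simp
qed

lemma btrans_bound:
  fixes rate :: "real \<Rightarrow> nat \<Rightarrow> real"
  assumes R: "R \<ge> 0" and bd: "\<And>u k. u \<in> {s..t} \<Longrightarrow> \<bar>rate u k\<bar> \<le> R"
    and st: "s \<le> t" and small: "R * (t - s) \<le> 1"
  shows "u \<in> {s..t} \<Longrightarrow> \<bar>btrans rate s u k d\<bar> \<le> exp 1 * (exp 1 * R * (t - s)) ^ d"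
proof (induction d arbitrary: u)
  case 0
  have "\<bar>exp (- (LBINT x=s..u. rate x k))\<bar> \<le> exp 1"
  proof (rule exp_LBINT_bound)
    show "s \<le> u" using 0 by auto
    show "R * (u - s) \<le> 1" using 0 small R by (smt (verit) atLeastAtMost_iff mult_left_mono)
  qed (use R bd 0 in auto)
  thus ?case by simp
next
  case (Suc d)
  define E where "E = exp (1::real)"
  have E0: "E \<ge> 0" unfolding E_def by simp
  have h0: "t - s \<ge> 0" using st by simp
  let ?B = "E * (E * R * (t - s)) ^ d * R * E"
  have bnd: "\<bar>btrans rate s w k d * rate w (k + d) * exp (- (LBINT v=w..u. rate v (k + Suc d)))\<bar> \<le> ?B"
    if w: "w \<in> {s..u}" for w
  proof -
    have w': "w \<in> {s..t}" using w Suc.prems by auto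
    have a1: "\<bar>btrans rate s w k d\<bar> \<le> E * (E * R * (t - s)) ^ d" using Suc.IH[OF w'] unfolding E_def .
    have a2: "\<bar>rate w (k + d)\<bar> \<le> R" using bd[OF w'] .
    have a3: "\<bar>exp (- (LBINT v=w..u. rate v (k + Suc d)))\<bar> \<le> E"
      unfolding E_def
    proof (rule exp_LBINT_bound)
      show "w \<le> u" using w by auto
      have "u - w \<le> t - s" using w Suc.prems by auto
      thus "R * (u - w) \<le> 1" using small R by (smt (verit) mult_left_mono)
    qed (use R bd w Suc.prems in auto)
    have "\<bar>btrans rate s w k d * rate w (k + d) * exp (- (LBINT v=w..u. rate v (k + Suc d)))\<bar>
        = \<bar>btrans rate s w k d\<bar> * \<bar>rate w (k + d)\<bar> * \<bar>exp (- (LBINT v=w..u. rate v (k + Suc d)))\<bar>"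
      by (simp add: abs_mult)
    also have "\<dots> \<le> (E * (E * R * (t - s)) ^ d) * R * E"
      using a1 a2 a3 E0 R h0 by (intro mult_mono) auto
    finally show ?thesis by simp
  qed
  have "\<bar>btrans rate s u k (Suc d)\<bar> \<le> ?B * (u - s)"
    unfolding btrans.simps by (rule LBINT_bound) (use Suc.prems bnd E0 R h0 in auto)
  also have "\<dots> \<le> ?B * (t - s)"
    using Suc.prems E0 R h0 by (intro mult_left_mono) auto
  also have "\<dots> = E * (E * R * (t - s)) ^ Suc d" by (simp add: algebra_simps)
  finally show ?case unfolding E_def .
qed


lemma path_lemma:
  fixes f :: "real \<Rightarrow> nat"
  assumes cd: "cadlag f" and bd: "\<forall>q\<in>\<rat>. q \<ge> 0 \<longrightarrow> f q \<le> c"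
    and mo: "\<forall>q\<in>\<rat>. \<forall>r\<in>\<rat>. 0 \<le> q \<longrightarrow> q \<le> r \<longrightarrow> f q \<le> f r"
  shows "mono_on {0..} f" "\<forall>t\<ge>0. f t \<le> c"
proof -
  have rc: "\<exists>q\<in>\<rat>. t < q \<and> q < t' \<and> f q = f t" if "t \<ge> 0" "t < t'" for t t'
  proof -
    have "\<exists>e>0. \<forall>u\<in>{t..<t+e}. f u = f t" using cd[unfolded cadlag_def, rule_format, OF that(1)] by (rule conjunct1)
    then obtain e where e: "e > 0" "\<forall>u\<in>{t..<t+e}. f u = f t" by blast
    have "t < min (t + e) t'" using e that by simp
    then obtain q where q: "q \<in> \<rat>" "t < q" "q < min (t + e) t'" using Rats_dense_in_real by blast
    have "q \<in> {t..<t+e}" using q by simp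
    hence "f q = f t" using e(2) by blast
    thus ?thesis using q by auto
  qed
  show "\<forall>t\<ge>0. f t \<le> c"
  proof (intro allI impI)
    fix t :: real assume "t \<ge> 0"
    then obtain q where "q \<in> \<rat>" "t < q" "f q = f t" using rc[of t "t+1"] by auto
    moreover have "0 \<le> q" using \<open>t < q\<close> \<open>t \<ge> 0\<close> by simp
    ultimately show "f t \<le> c" using bd by metis
  qed
  show "mono_on {0..} f"
  proof (rule mono_onI)
    fix t t' :: real assume tt: "t \<in> {0..}" "t' \<in> {0..}" "t \<le> t'"
    show "f t \<le> f t'"
    proof (cases "t = t'")
      case True thus ?thesis by simp
    next
      case False
      hence lt: "t < t'" using tt by simp
      obtain q where q: "q \<in> \<rat>" "t < q" "q < t'" "f q = f t" using rc[of t t'] tt lt by auto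
      obtain q' where q': "q' \<in> \<rat>" "t' < q'" "f q' = f t'" using rc[of t' "t'+1"] tt by auto
      have qq: "0 \<le> q" "q \<le> q'" using q q' tt by auto
      have "f q \<le> f q'" using mo q(1) q'(1) qq by blast
      thus ?thesis using q q' by simp
    qed
  qed
qed

locale bp = prob_space M for M :: "'a measure" +
  fixes X :: "real \<Rightarrow> 'a \<Rightarrow> nat" and j :: nat
  assumes bp: "birth_process M X (prate j)" and j: "1 \<le> j"
begin

lemma meas[measurable]: "X t \<in> measurable M (count_space UNIV)"
  using bp unfolding birth_process_def by auto

lemma ev2: "{\<omega> \<in> space M. P (X s \<omega>) (X t \<omega>)} \<in> events" by measurable

lemma markov0:
  assumes "0 \<le> s" "s \<le> t"
  shows "prob {\<omega>\<in>space M. X s \<omega> = k \<and> X t \<omega> = m} = prob {\<omega>\<in>space M. X s \<omega> = k} * birth_trans (prate j) s t k m"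
proof -
  have "space M \<in> nat_filt M X s" unfolding nat_filt_def by (rule sigma_sets_top)
  with bp assms have "prob (space M \<inter> {\<omega>\<in>space M. X s \<omega> = k \<and> X t \<omega> = m}) = prob (space M \<inter> {\<omega>\<in>space M. X s \<omega> = k}) * birth_trans (prate j) s t k m"
    unfolding birth_process_def by blast
  thus ?thesis by (simp add: Int_absorb1)
qed

lemma marg:
  assumes t: "t \<ge> 0" and k: "k \<le> j - 1"
  shows "prob {\<omega>\<in>space M. X t \<omega> = k} = t ^ k / Zp j t"
proof -
  have ae0: "AE \<omega> in M. X 0 \<omega> = 0" using bp unfolding birth_process_def by auto
  have "prob {\<omega>\<in>space M. X t \<omega> = k} = prob {\<omega>\<in>space M. X 0 \<omega> = 0 \<and> X t \<omega> = k}"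
    by (rule finite_measure_eq_AE) (use ae0 in auto)
  also have "\<dots> = prob {\<omega>\<in>space M. X 0 \<omega> = 0} * birth_trans (prate j) 0 t 0 k"
    by (rule markov0) (use t in auto)
  also have "prob {\<omega>\<in>space M. X 0 \<omega> = 0} = 1"
    using ae0 by (subst prob_eq_1) auto
  also have "birth_trans (prate j) 0 t 0 k = t ^ k / Zp j t"
    unfolding birth_trans_def using btrans_marg[OF j k t] by simp
  finally show ?thesis by simp
qed

lemma AE_le:
  assumes t: "t \<ge> 0"
  shows "AE \<omega> in M. X t \<omega> \<le> j - 1"
proof -
  have "{\<omega>\<in>space M. X t \<omega> \<le> j - 1} = (\<Union>k\<in>{..j-1}. {\<omega>\<in>space M. X t \<omega> = k})" by auto
  hence "prob {\<omega>\<in>space M. X t \<omega> \<le> j - 1} = (\<Sum>k\<in>{..j-1}. prob {\<omega>\<in>space M. X t \<omega> = k})"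
    by (simp, intro measure_finite_Union) (auto simp: disjoint_family_on_def)
  also have "\<dots> = (\<Sum>k\<in>{..j-1}. t ^ k / Zp j t)" using marg[OF t] by simp
  also have "\<dots> = 1"
  proof -
    have "Zp j t \<ge> 1" using Zp_ge1[OF t j] .
    moreover have "{..j-1} = {..<j}" using j by auto
    ultimately show ?thesis by (simp add: Zp_def sum_divide_distrib[symmetric])
  qed
  finally show ?thesis by (subst (asm) prob_eq_1) auto
qed

lemma AE_mono2:
  assumes "0 \<le> s" "s \<le> t"
  shows "AE \<omega> in M. X s \<omega> \<le> X t \<omega>"
proof -
  have h: "AE \<omega> in M. m < k \<longrightarrow> \<not> (X s \<omega> = k \<and> X t \<omega> = m)" for k m
  proof (cases "m < k")
    case True
    have "AE \<omega> in M. \<omega> \<notin> {\<omega>\<in>space M. X s \<omega> = k \<and> X t \<omega> = m}"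
    proof (rule AE_not_in)
      have "prob {\<omega>\<in>space M. X s \<omega> = k \<and> X t \<omega> = m} = 0"
        using markov0[OF assms, of k m] True by (simp add: birth_trans_def)
      thus "{\<omega>\<in>space M. X s \<omega> = k \<and> X t \<omega> = m} \<in> null_sets M"
        by (simp add: null_sets_def emeasure_eq_measure)
    qed
    from this AE_space show ?thesis by eventually_elim auto
  qed simp
  have "AE \<omega> in M. \<forall>k m. m < k \<longrightarrow> \<not> (X s \<omega> = k \<and> X t \<omega> = m)"
    unfolding AE_all_countable by (intro allI h)
  thus ?thesis by eventually_elim (metis not_le)
qed

lemma AE_good: "AE \<omega> in M. cadlag (\<lambda>t. X t \<omega>) \<and> mono_on {0..} (\<lambda>t. X t \<omega>) \<and> (\<forall>t\<ge>0. X t \<omega> \<le> j - 1)"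
proof -
  have c: "AE \<omega> in M. cadlag (\<lambda>t. X t \<omega>)" using bp unfolding birth_process_def by auto
  have b: "AE \<omega> in M. \<forall>q\<in>\<rat>. q \<ge> 0 \<longrightarrow> X q \<omega> \<le> j - 1"
    by (rule AE_ball_countable'[OF _ countable_rat]) (use AE_le in auto)
  have m: "AE \<omega> in M. \<forall>q\<in>\<rat>. \<forall>r\<in>\<rat>. 0 \<le> q \<longrightarrow> q \<le> r \<longrightarrow> X q \<omega> \<le> X r \<omega>"
    by (intro AE_ball_countable'[OF _ countable_rat]) (use AE_mono2 in auto)
  from c b m show ?thesis
  proof eventually_elim
    case (elim \<omega>)
    thus ?case using path_lemma[of "\<lambda>t. X t \<omega>" "j - 1"] by auto
  qed
qed

lemma rate_bound: "\<exists>R\<ge>0. \<forall>u\<in>{0..T}. \<forall>k. \<bar>prate j u k\<bar> \<le> R"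
proof -
  have "\<forall>k\<in>{..<j}. \<exists>R. \<forall>u\<in>{0..T}. \<bar>prate j u k\<bar> \<le> R"
  proof
    fix k assume "k \<in> {..<j}"
    hence "k \<le> j - 1" by auto
    hence "compact ((\<lambda>u. prate j u k) ` {0..T})"
      by (intro compact_continuous_image prate_cont[OF j] compact_Icc)
    hence "bounded ((\<lambda>u. prate j u k) ` {0..T})" by (rule compact_imp_bounded)
    then obtain a where "\<forall>x\<in>(\<lambda>u. prate j u k) ` {0..T}. norm x \<le> a" unfolding bounded_iff by blast
    thus "\<exists>R. \<forall>u\<in>{0..T}. \<bar>prate j u k\<bar> \<le> R" by auto
  qed
  then obtain Rf where Rf: "\<forall>k\<in>{..<j}. \<forall>u\<in>{0..T}. \<bar>prate j u k\<bar> \<le> Rf k" by (metis bchoice)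
  define R where "R = (\<Sum>k<j. \<bar>Rf k\<bar>)"
  have "\<forall>u\<in>{0..T}. \<forall>k. \<bar>prate j u k\<bar> \<le> R"
  proof (intro ballI allI)
    fix u k assume u: "u \<in> {0..T}"
    show "\<bar>prate j u k\<bar> \<le> R"
    proof (cases "k < j")
      case True
      have "\<bar>prate j u k\<bar> \<le> Rf k" using Rf True u by auto
      also have "\<dots> \<le> \<bar>Rf k\<bar>" by simp
      also have "\<dots> \<le> R" unfolding R_def by (rule member_le_sum) (use True in auto)
      finally show ?thesis .
    next
      case False
      hence "prate j u k = 0" unfolding prate_def by auto
      thus ?thesis unfolding R_def by (simp add: sum_nonneg)
    qed
  qed
  moreover have "R \<ge> 0" unfolding R_def by (simp add: sum_nonneg)
  ultimately show ?thesis by blast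
qed

lemma incr_bound:
  assumes R: "R \<ge> 0" "\<forall>u\<in>{0..T}. \<forall>k. \<bar>prate j u k\<bar> \<le> R"
    and ab: "0 \<le> a" "a \<le> b" "b \<le> T" and small: "exp 1 * R * (b - a) \<le> 1" and d: "d \<ge> 1"
  shows "prob {\<omega>\<in>space M. X a \<omega> + d \<le> X b \<omega>} \<le> real j * real j * exp 1 * (exp 1 * R * (b - a)) ^ d"
proof -
  define E where "E = exp (1::real)"
  define x where "x = E * R * (b - a)"
  have E1: "E \<ge> 1" unfolding E_def by simp
  have x0: "x \<ge> 0" "x \<le> 1" using small R ab E1 unfolding x_def E_def by auto
  have Rsmall: "R * (b - a) \<le> 1"
  proof -
    have nn: "0 \<le> R * (b - a)" using R ab by simp
    have "1 * (R * (b - a)) \<le> E * (R * (b - a))" by (rule mult_right_mono[OF E1 nn])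
    hence "R * (b - a) \<le> E * (R * (b - a))" by simp
    thus ?thesis using small unfolding E_def by (simp add: mult.assoc)
  qed
  define S where "S k m = {\<omega>\<in>space M. X a \<omega> = k \<and> X b \<omega> = m}" for k m
  have Sev: "S k m \<in> events" for k m unfolding S_def by measurable
  have b0: "0 \<le> b" using ab by simp
  have ae: "AE \<omega> in M. X a \<omega> \<le> j - 1 \<and> X b \<omega> \<le> j - 1" using AE_le[OF ab(1)] AE_le[OF b0] by eventually_elim auto
  have "prob {\<omega>\<in>space M. X a \<omega> + d \<le> X b \<omega>} \<le> prob (\<Union>k\<in>{..<j}. \<Union>m\<in>{k+d..<j}. S k m)"
  proof (rule finite_measure_mono_AE)
    show "(\<Union>k\<in>{..<j}. \<Union>m\<in>{k+d..<j}. S k m) \<in> events" using Sev by auto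
    from ae show "AE \<omega> in M. \<omega> \<in> {\<omega>\<in>space M. X a \<omega> + d \<le> X b \<omega>} \<longrightarrow> \<omega> \<in> (\<Union>k\<in>{..<j}. \<Union>m\<in>{k+d..<j}. S k m)"
    proof eventually_elim
      case (elim \<omega>)
      show ?case
      proof
        assume "\<omega> \<in> {\<omega>\<in>space M. X a \<omega> + d \<le> X b \<omega>}"
        hence "\<omega> \<in> space M" "X a \<omega> + d \<le> X b \<omega>" by auto
        moreover have "X a \<omega> < j" "X b \<omega> < j" using elim j by auto
        ultimately show "\<omega> \<in> (\<Union>k\<in>{..<j}. \<Union>m\<in>{k+d..<j}. S k m)" unfolding S_def by auto
      qed
    qed
  qed
  also have "\<dots> \<le> (\<Sum>k\<in>{..<j}. prob (\<Union>m\<in>{k+d..<j}. S k m))"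
    by (rule measure_UNION_le) (use Sev in auto)
  also have "\<dots> \<le> (\<Sum>k\<in>{..<j}. \<Sum>m\<in>{k+d..<j}. prob (S k m))"
    by (intro sum_mono measure_UNION_le) (use Sev in auto)
  also have "\<dots> \<le> (\<Sum>k\<in>{..<j}. \<Sum>m\<in>{k+d..<j}. E * x ^ d)"
  proof (intro sum_mono)
    fix k m assume m: "m \<in> {k+d..<j}"
    have "prob (S k m) = prob {\<omega>\<in>space M. X a \<omega> = k} * btrans (prate j) a b k (m - k)"
      unfolding S_def using markov0[of a b k m] ab m by (simp add: birth_trans_def)
    also have "\<dots> \<le> prob {\<omega>\<in>space M. X a \<omega> = k} * \<bar>btrans (prate j) a b k (m - k)\<bar>"
      by (intro mult_left_mono) auto
    also have "\<dots> \<le> 1 * \<bar>btrans (prate j) a b k (m - k)\<bar>"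
      by (intro mult_right_mono) auto
    also have "\<dots> \<le> E * x ^ (m - k)"
      unfolding E_def x_def using btrans_bound[OF R(1) _ ab(2) Rsmall, of "prate j" b k "m - k"] R(2) ab
      by auto
    also have "\<dots> \<le> E * x ^ d" using x0 m E1 by (intro mult_left_mono power_decreasing) auto
    finally show "prob (S k m) \<le> E * x ^ d" .
  qed
  also have "\<dots> \<le> (\<Sum>k\<in>{..<j}. real j * (E * x ^ d))"
  proof (intro sum_mono)
    fix k assume "k \<in> {..<j}"
    have "card {k+d..<j} \<le> j" by simp
    moreover have "E * x ^ d \<ge> 0" using E1 x0 by simp
    ultimately show "(\<Sum>m\<in>{k+d..<j}. E * x ^ d) \<le> real j * (E * x ^ d)"
      by (simp add: mult_right_mono)
  qed
  also have "\<dots> = real j * real j * E * x ^ d" by simp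
  finally show ?thesis unfolding E_def x_def .
qed

lemma incr_K:
  "\<exists>K\<ge>0. \<forall>a b. 0 \<le> a \<longrightarrow> a \<le> b \<longrightarrow> b \<le> T \<longrightarrow>
     prob {\<omega>\<in>space M. X a \<omega> \<noteq> X b \<omega>} \<le> K * (b - a) \<and>
     prob {\<omega>\<in>space M. X a \<omega> + 2 \<le> X b \<omega>} \<le> K * (b - a)^2"
proof -
  obtain R where R: "R \<ge> 0" "\<forall>u\<in>{0..T}. \<forall>k. \<bar>prate j u k\<bar> \<le> R" using rate_bound by blast
  define E where "E = exp (1::real)"
  have E1: "E \<ge> 1" unfolding E_def by simp
  define K where "K = real j * real j * E * E * R + real j * real j * E * E * E * R * R + E * R + E * E * R * R"
  have K0: "K \<ge> 0" unfolding K_def using R E1 by simp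
  have main: "prob {\<omega>\<in>space M. X a \<omega> \<noteq> X b \<omega>} \<le> K * (b - a) \<and>
     prob {\<omega>\<in>space M. X a \<omega> + 2 \<le> X b \<omega>} \<le> K * (b - a)^2"
    if ab: "0 \<le> a" "a \<le> b" "b \<le> T" for a b
  proof -
    define h where "h = b - a"
    have h0: "h \<ge> 0" using ab unfolding h_def by simp
    have ne: "prob {\<omega>\<in>space M. X a \<omega> \<noteq> X b \<omega>} \<le> prob {\<omega>\<in>space M. X a \<omega> + 1 \<le> X b \<omega>}"
    proof (rule finite_measure_mono_AE)
      show "{\<omega>\<in>space M. X a \<omega> + 1 \<le> X b \<omega>} \<in> events" by (rule ev2)
      from AE_mono2[OF ab(1,2)] show "AE \<omega> in M. \<omega> \<in> {\<omega>\<in>space M. X a \<omega> \<noteq> X b \<omega>} \<longrightarrow> \<omega> \<in> {\<omega>\<in>space M. X a \<omega> + 1 \<le> X b \<omega>}"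
        by eventually_elim auto
    qed
    show ?thesis
    proof (cases "E * R * h \<le> 1")
      case True
      have b1: "prob {\<omega>\<in>space M. X a \<omega> + 1 \<le> X b \<omega>} \<le> real j * real j * E * (E * R * h) ^ 1"
        using incr_bound[OF R ab, of 1] True unfolding E_def h_def by simp
      have b2: "prob {\<omega>\<in>space M. X a \<omega> + 2 \<le> X b \<omega>} \<le> real j * real j * E * (E * R * h) ^ 2"
        using incr_bound[OF R ab, of 2] True unfolding E_def h_def by simp
      have "real j * real j * E * (E * R * h) ^ 1 \<le> K * h"
        unfolding K_def using R E1 h0 by (simp add: algebra_simps mult_nonneg_nonneg)
      moreover have "real j * real j * E * (E * R * h) ^ 2 \<le> K * h ^ 2"
        unfolding K_def using R E1 h0 by (simp add: algebra_simps power2_eq_square mult_nonneg_nonneg)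
      ultimately show ?thesis using b1 b2 ne unfolding h_def by linarith
    next
      case False
      have "1 \<le> E * R * h" using False by simp
      also have "\<dots> \<le> K * h" unfolding K_def using R E1 h0 by (simp add: algebra_simps mult_nonneg_nonneg)
      finally have c1: "1 \<le> K * h" .
      have "1 \<le> (E * R * h)^2" using False by (simp add: power2_eq_square) (smt (verit) mult_le_cancel_left1)
      also have "\<dots> \<le> K * h ^ 2" unfolding K_def using R E1 h0 by (simp add: algebra_simps power2_eq_square mult_nonneg_nonneg)
      finally have c2: "1 \<le> K * h ^ 2" .
      show ?thesis using c1 c2 prob_le_1 unfolding h_def by (meson order.trans)
    qed
  qed
  show ?thesis using K0 main by blast
qed

end


lemma (in sigma_algebra) Collect_finite_All:
  assumes "\<And>i. i \<in> S \<Longrightarrow> {x\<in>\<Omega>. P i x} \<in> M" "finite S"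
  shows "{x\<in>\<Omega>. \<forall>i\<in>S. P i x} \<in> M"
proof (cases "S = {}")
  case True thus ?thesis by simp
next
  case False thus ?thesis by (intro sets_Collect_finite_All' assms)
qed

lemma left_lim_eq:
  assumes e: "e > 0" "\<forall>u\<in>{t-e<..<t}. F u = c"
  shows "left_lim F t = c"
  unfolding left_lim_def
proof (rule the_equality)
  show "\<exists>e>0. \<forall>u\<in>{t-e<..<t}. F u = c" using e by blast
  fix c' assume "\<exists>e>0. \<forall>u\<in>{t-e<..<t}. F u = c'"
  then obtain e' where e': "e' > 0" "\<forall>u\<in>{t-e'<..<t}. F u = c'" by blast
  define u where "u = t - min e e' / 2"
  have "u \<in> {t-e<..<t}" "u \<in> {t-e'<..<t}" using e e' unfolding u_def by auto
  hence "F u = c" "F u = c'" using e(2) e'(2) by blast+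
  thus "c' = c" by simp
qed

lemma cadlag_left:
  assumes "cadlag F" "t > 0"
  shows "\<exists>e>0. \<forall>u\<in>{t-e<..<t}. F u = left_lim F t"
proof -
  have "\<exists>c. \<exists>e>0. \<forall>u\<in>{t-e<..<t}. F u = c"
    using assms(1)[unfolded cadlag_def, rule_format, of t] assms(2) by simp
  then obtain c e where ce: "e > 0" "\<forall>u\<in>{t-e<..<t}. F u = c" by blast
  hence "left_lim F t = c" by (rule left_lim_eq)
  thus ?thesis using ce by auto
qed

lemma cadlag_right:
  assumes "cadlag F" "t \<ge> 0"
  shows "\<exists>e>0. \<forall>u\<in>{t..<t+e}. F u = F t"
  using assms(1)[unfolded cadlag_def, rule_format, OF assms(2)] by (rule conjunct1)

lemma min_pos_choice:
  assumes "finite J" "\<forall>j\<in>J. \<exists>e>0. P j e" and mono: "\<And>j e e'. P j e \<Longrightarrow> 0 < e' \<Longrightarrow> e' \<le> e \<Longrightarrow> P j e'"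
  shows "\<exists>e>(0::real). \<forall>j\<in>J. P j e"
proof -
  obtain ef where ef: "\<forall>j\<in>J. ef j > 0 \<and> P j (ef j)" using assms(2) by metis
  define e where "e = Min (insert 1 (ef ` J))"
  have fin: "finite (insert 1 (ef ` J))" using assms(1) by simp
  have e0: "e > 0" unfolding e_def using fin ef by (subst Min_gr_iff) auto
  have "\<forall>j\<in>J. P j e"
  proof
    fix j assume j: "j \<in> J"
    have "e \<le> ef j" unfolding e_def using fin j by (intro Min_le) auto
    thus "P j e" using mono[of j "ef j" e] ef j e0 by auto
  qed
  thus ?thesis using e0 by blast
qed

lemma cadlag_vec:
  assumes J: "finite J" and cd: "\<forall>j\<in>J. cadlag (f j)"
    and resp: "\<And>I I'. (\<forall>j\<in>J. I j = I' j) \<Longrightarrow> g I = g I'"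
  shows "cadlag (\<lambda>t. g (\<lambda>j. f j t))" "\<And>t. t > 0 \<Longrightarrow> left_lim (\<lambda>t. g (\<lambda>j. f j t)) t = g (\<lambda>j. left_lim (f j) t)"
proof -
  have R: "\<exists>e>0. \<forall>u\<in>{t..<t+e}. g (\<lambda>j. f j u) = g (\<lambda>j. f j t)" if t: "t \<ge> 0" for t
  proof -
    have "\<exists>e>(0::real). \<forall>j\<in>J. \<forall>u\<in>{t..<t+e}. f j u = f j t"
    proof (rule min_pos_choice[OF J])
      show "\<forall>j\<in>J. \<exists>e>0. \<forall>u\<in>{t..<t+e}. f j u = f j t" using cd t cadlag_right by blast
      fix j e e' assume h: "\<forall>u\<in>{t..<t+e}. f j u = f j t" "0 < e'" "e' \<le> (e::real)"
      show "\<forall>u\<in>{t..<t+e'}. f j u = f j t"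
      proof
        fix u assume "u \<in> {t..<t+e'}"
        hence "u \<in> {t..<t+e}" using h(3) by auto
        thus "f j u = f j t" using h(1) by blast
      qed
    qed
    then obtain e where e: "e > 0" "\<forall>j\<in>J. \<forall>u\<in>{t..<t+e}. f j u = f j t" by blast
    have "\<forall>u\<in>{t..<t+e}. g (\<lambda>j. f j u) = g (\<lambda>j. f j t)"
    proof
      fix u assume "u \<in> {t..<t+e}"
      thus "g (\<lambda>j. f j u) = g (\<lambda>j. f j t)" using e(2) by (intro resp) blast
    qed
    thus ?thesis using e(1) by blast
  qed
  have L: "\<exists>e>0. \<forall>u\<in>{t-e<..<t}. g (\<lambda>j. f j u) = g (\<lambda>j. left_lim (f j) t)" if t: "t > 0" for t
  proof -
    have "\<exists>e>(0::real). \<forall>j\<in>J. \<forall>u\<in>{t-e<..<t}. f j u = left_lim (f j) t"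
    proof (rule min_pos_choice[OF J])
      show "\<forall>j\<in>J. \<exists>e>0. \<forall>u\<in>{t-e<..<t}. f j u = left_lim (f j) t" using cd t cadlag_left by blast
      fix j e e' assume h: "\<forall>u\<in>{t-e<..<t}. f j u = left_lim (f j) t" "0 < e'" "e' \<le> (e::real)"
      show "\<forall>u\<in>{t-e'<..<t}. f j u = left_lim (f j) t"
      proof
        fix u assume "u \<in> {t-e'<..<t}"
        hence "u \<in> {t-e<..<t}" using h(3) by auto
        thus "f j u = left_lim (f j) t" using h(1) by blast
      qed
    qed
    then obtain e where e: "e > 0" "\<forall>j\<in>J. \<forall>u\<in>{t-e<..<t}. f j u = left_lim (f j) t" by blast
    have "\<forall>u\<in>{t-e<..<t}. g (\<lambda>j. f j u) = g (\<lambda>j. left_lim (f j) t)"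
    proof
      fix u assume "u \<in> {t-e<..<t}"
      thus "g (\<lambda>j. f j u) = g (\<lambda>j. left_lim (f j) t)" using e(2) by (intro resp) blast
    qed
    thus ?thesis using e(1) by blast
  qed
  show "cadlag (\<lambda>t. g (\<lambda>j. f j t))" unfolding cadlag_def using R L by blast
  show "\<And>t. t > 0 \<Longrightarrow> left_lim (\<lambda>t. g (\<lambda>j. f j t)) t = g (\<lambda>j. left_lim (f j) t)"
  proof -
    fix t :: real assume "t > 0"
    then obtain e where "e > 0" "\<forall>u\<in>{t-e<..<t}. g (\<lambda>j. f j u) = g (\<lambda>j. left_lim (f j) t)" using L by blast
    thus "left_lim (\<lambda>t. g (\<lambda>j. f j t)) t = g (\<lambda>j. left_lim (f j) t)" by (rule left_lim_eq)
  qed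
qed

locale mp = prob_space M for M :: "'a measure" +
  fixes n :: nat and B :: "nat \<Rightarrow> real \<Rightarrow> 'a \<Rightarrow> nat"
  assumes bps: "\<forall>j\<in>{1..n}. birth_process M (B j) (prate j)"
  and ind: "indep_vars (\<lambda>_. Pi\<^sub>M {0..} (\<lambda>_. count_space UNIV)) (\<lambda>j \<omega>. restrict (\<lambda>t. B j t \<omega>) {0..}) {1..n}"
begin

definition Xp where "Xp t \<omega> = Phi n (\<lambda>j. B j t \<omega>)"

lemma bpj: "j \<in> {1..n} \<Longrightarrow> bp M (B j) j"
  unfolding bp_def bp_axioms_def using bps prob_space_axioms by auto

lemma measB: "j \<in> {1..n} \<Longrightarrow> B j t \<in> measurable M (count_space UNIV)"
  using bps unfolding birth_process_def by auto

lemma evB: assumes "j \<in> {1..n}" shows "{\<omega>\<in>space M. P (B j t \<omega>)} \<in> events"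
proof -
  have "B j t -` {x. P x} \<inter> space M \<in> events" by (rule measurable_sets[OF measB[OF assms]]) simp
  moreover have "B j t -` {x. P x} \<inter> space M = {\<omega>\<in>space M. P (B j t \<omega>)}" by auto
  ultimately show ?thesis by simp
qed

lemma vec_sets:
  assumes resp: "\<And>I I'. (\<forall>j\<in>{1..n}. I j = I' j) \<Longrightarrow> P I = P I'"
  shows "{\<omega>\<in>space M. P (\<lambda>j. B j t \<omega>)} \<in> events"
proof -
  let ?C = "PiE {1..n} (\<lambda>_. UNIV :: nat set) \<inter> {c. P c}"
  have eq: "{\<omega>\<in>space M. P (\<lambda>j. B j t \<omega>)} = (\<Union>c\<in>?C. {\<omega>\<in>space M. \<forall>j\<in>{1..n}. B j t \<omega> = c j})"
  proof (intro equalityI subsetI)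
    fix \<omega> assume w: "\<omega> \<in> {\<omega>\<in>space M. P (\<lambda>j. B j t \<omega>)}"
    define c where "c = restrict (\<lambda>j. B j t \<omega>) {1..n}"
    have "P c = P (\<lambda>j. B j t \<omega>)" by (rule resp) (simp add: c_def)
    hence "c \<in> ?C" using w unfolding c_def by auto
    moreover have "\<omega> \<in> {\<omega>\<in>space M. \<forall>j\<in>{1..n}. B j t \<omega> = c j}" using w unfolding c_def by auto
    ultimately show "\<omega> \<in> (\<Union>c\<in>?C. {\<omega>\<in>space M. \<forall>j\<in>{1..n}. B j t \<omega> = c j})" by blast
  next
    fix \<omega> assume "\<omega> \<in> (\<Union>c\<in>?C. {\<omega>\<in>space M. \<forall>j\<in>{1..n}. B j t \<omega> = c j})"
    then obtain c where c: "c \<in> ?C" "\<omega> \<in> space M" "\<forall>j\<in>{1..n}. B j t \<omega> = c j" by blast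
    have "P (\<lambda>j. B j t \<omega>) = P c" by (rule resp) (use c in auto)
    thus "\<omega> \<in> {\<omega>\<in>space M. P (\<lambda>j. B j t \<omega>)}" using c by auto
  qed
  have "countable (PiE {1..n} (\<lambda>_. UNIV :: nat set))" by (rule countable_PiE) auto
  hence "countable ?C" by (rule countable_subset[rotated]) auto
  moreover have "{\<omega>\<in>space M. \<forall>j\<in>{1..n}. B j t \<omega> = c j} \<in> events" for c
    by (rule sets.Collect_finite_All) (auto intro: evB)
  ultimately show ?thesis unfolding eq by (intro sets.countable_UN'') auto
qed

lemma measX: "Xp t \<in> measurable M (count_space UNIV)"
proof (rule measurableI)
  fix A :: "(nat \<Rightarrow> nat) set"
  have "Xp t -` A \<inter> space M = {\<omega>\<in>space M. Phi n (\<lambda>j. B j t \<omega>) \<in> A}" unfolding Xp_def by auto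
  also have "\<dots> \<in> events" by (rule vec_sets) (metis Phi_cong)
  finally show "Xp t -` A \<inter> space M \<in> events" .
qed auto

lemma evX: "{\<omega>\<in>space M. P (Xp t \<omega>)} \<in> events"
proof -
  have "Xp t -` {x. P x} \<inter> space M \<in> events" by (rule measurable_sets[OF measX]) simp
  moreover have "Xp t -` {x. P x} \<inter> space M = {\<omega>\<in>space M. P (Xp t \<omega>)}" by auto
  ultimately show ?thesis by simp
qed

definition Good where "Good \<omega> \<longleftrightarrow> (\<forall>j\<in>{1..n}. cadlag (\<lambda>t. B j t \<omega>) \<and> mono_on {0..} (\<lambda>t. B j t \<omega>) \<and> (\<forall>t\<ge>0. B j t \<omega> \<le> j - 1))"

lemma AE_Good: "AE \<omega> in M. Good \<omega>"
  unfolding Good_def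
proof (rule AE_finite_allI)
  fix j assume "j \<in> {1..n}"
  from bp.AE_good[OF bpj[OF this]]
  show "AE \<omega> in M. cadlag (\<lambda>t. B j t \<omega>) \<and> mono_on {0..} (\<lambda>t. B j t \<omega>) \<and> (\<forall>t\<ge>0. B j t \<omega> \<le> j - 1)" .
qed simp

lemma Good_X:
  assumes "Good \<omega>" "t \<ge> 0"
  shows "Xp t \<omega> \<in> Sn n" "\<forall>j\<in>{1..n}. invj j (Xp t \<omega>) = B j t \<omega>"
proof -
  have "\<forall>j\<in>{1..n}. B j t \<omega> \<le> j - 1" using assms unfolding Good_def by blast
  from Phi_props[OF this] show "Xp t \<omega> \<in> Sn n" "\<forall>j\<in>{1..n}. invj j (Xp t \<omega>) = B j t \<omega>"
    unfolding Xp_def by auto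
qed

lemma Good_cadlag:
  assumes "Good \<omega>"
  shows "cadlag (\<lambda>t. Xp t \<omega>)" "\<And>t. t > 0 \<Longrightarrow> left_lim (\<lambda>t. Xp t \<omega>) t = Phi n (\<lambda>j. left_lim (\<lambda>t. B j t \<omega>) t)"
proof -
  have cd: "\<forall>j\<in>{1..n}. cadlag (\<lambda>t. B j t \<omega>)" using assms unfolding Good_def by blast
  note cv = cadlag_vec[of "{1..n}" "\<lambda>j t. B j t \<omega>" "Phi n", OF _ cd Phi_cong]
  show "cadlag (\<lambda>t. Xp t \<omega>)" unfolding Xp_def[abs_def] using cv(1) by simp
  show "\<And>t. t > 0 \<Longrightarrow> left_lim (\<lambda>t. Xp t \<omega>) t = Phi n (\<lambda>j. left_lim (\<lambda>t. B j t \<omega>) t)"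
    unfolding Xp_def[abs_def] using cv(2) by simp
qed

abbreviation NN :: "(real \<Rightarrow> nat) measure" where "NN \<equiv> Pi\<^sub>M {0..} (\<lambda>_. count_space UNIV)"
definition path where "path j \<omega> = restrict (\<lambda>t. B j t \<omega>) {0..}"
definition Fs where "Fs j = sigma_sets (space M) {path j -` A \<inter> space M | A. A \<in> sets NN}"

lemma indep_Fs: "indep_sets Fs {1..n}"
  using ind unfolding indep_vars_def Fs_def path_def by auto

lemma Fs_sa: "sigma_algebra (space M) (Fs j)"
  unfolding Fs_def by (rule sigma_algebra_sigma_sets) auto

lemma path_space: "path j \<omega> \<in> space NN"
  unfolding path_def by (simp add: space_PiM)

lemma ev_Fs:
  assumes "t \<ge> 0"
  shows "{\<omega>\<in>space M. P (B j t \<omega>)} \<in> Fs j"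
proof -
  have "(\<lambda>f. f t) \<in> measurable NN (count_space UNIV)"
    using measurable_component_singleton[of t "{0..}" "\<lambda>_. count_space UNIV"] assms by simp
  hence S: "(\<lambda>f. f t) -` {x. P x} \<inter> space NN \<in> sets NN" by (rule measurable_sets) simp
  have eq: "{\<omega>\<in>space M. P (B j t \<omega>)} = path j -` ((\<lambda>f. f t) -` {x. P x} \<inter> space NN) \<inter> space M"
    using assms path_space by (auto simp: path_def)
  show ?thesis unfolding eq Fs_def by (rule sigma_sets.Basic) (use S in blast)
qed

lemma Fs_sub: "j \<in> {1..n} \<Longrightarrow> Fs j \<subseteq> events"
  unfolding Fs_def
proof (rule sets.sigma_sets_subset, safe)
  fix A assume "j \<in> {1..n}" "A \<in> sets NN"
  have "path j \<in> measurable M NN" using ind \<open>j \<in> {1..n}\<close> unfolding indep_vars_def path_def by auto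
  thus "path j -` A \<inter> space M \<in> events" using \<open>A \<in> sets NN\<close> by (rule measurable_sets)
qed

lemma nat_filt_Fs:
  assumes "s \<ge> 0"
  shows "nat_filt M (B j) s \<subseteq> Fs j"
  unfolding nat_filt_def
proof (rule sigma_algebra.sigma_sets_subset[OF Fs_sa], safe)
  fix r A assume r: "0 \<le> r" "r \<le> s"
  have "B j r -` A \<inter> space M = {\<omega>\<in>space M. B j r \<omega> \<in> A}" by auto
  also have "\<dots> \<in> Fs j" by (rule ev_Fs) (use r in auto)
  finally show "B j r -` A \<inter> space M \<in> Fs j" .
qed

lemma prod_Fs:
  assumes "\<And>j. j \<in> {1..n} \<Longrightarrow> E j \<in> Fs j"
  shows "prob (space M \<inter> (\<Inter>j\<in>{1..n}. E j)) = (\<Prod>j\<in>{1..n}. prob (E j))"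
proof (cases "n = 0")
  case True thus ?thesis by (simp add: prob_space)
next
  case False
  have sub: "E j \<subseteq> space M" if "j \<in> {1..n}" for j using Fs_sub[OF that] assms[OF that] sets.sets_into_space by blast
  have "(\<Inter>j\<in>{1..n}. E j) \<subseteq> E 1" using False by auto
  also have "E 1 \<subseteq> space M" using sub False by auto
  finally have "space M \<inter> (\<Inter>j\<in>{1..n}. E j) = (\<Inter>j\<in>{1..n}. E j)" by blast
  moreover have "prob (\<Inter>j\<in>{1..n}. E j) = (\<Prod>j\<in>{1..n}. prob (E j))"
    by (rule indep_setsD[OF indep_Fs]) (use False assms in auto)
  ultimately show ?thesis by simp
qed

lemma dist_X:
  assumes t: "t \<ge> 0" and s: "\<sigma> \<in> Sn n"
  shows "prob {\<omega>\<in>space M. Xp t \<omega> = \<sigma>} = mallows n t \<sigma>"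
proof -
  have "prob {\<omega>\<in>space M. Xp t \<omega> = \<sigma>} = prob (space M \<inter> (\<Inter>j\<in>{1..n}. {\<omega>\<in>space M. B j t \<omega> = invj j \<sigma>}))"
  proof (rule finite_measure_eq_AE)
    show "{\<omega>\<in>space M. Xp t \<omega> = \<sigma>} \<in> events" by (rule evX)
    have "space M \<inter> (\<Inter>j\<in>{1..n}. {\<omega>\<in>space M. B j t \<omega> = invj j \<sigma>}) = {\<omega>\<in>space M. \<forall>j\<in>{1..n}. B j t \<omega> = invj j \<sigma>}"
      by auto
    also have "\<dots> \<in> events" by (rule sets.Collect_finite_All) (auto intro: evB)
    finally show "space M \<inter> (\<Inter>j\<in>{1..n}. {\<omega>\<in>space M. B j t \<omega> = invj j \<sigma>}) \<in> events" .
    from AE_Good show "AE \<omega> in M. (\<omega> \<in> {\<omega>\<in>space M. Xp t \<omega> = \<sigma>}) = (\<omega> \<in> space M \<inter> (\<Inter>j\<in>{1..n}. {\<omega>\<in>space M. B j t \<omega> = invj j \<sigma>}))"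
    proof eventually_elim
      case (elim \<omega>)
      note G = Good_X[OF elim t]
      have "Xp t \<omega> = \<sigma> \<longleftrightarrow> (\<forall>j\<in>{1..n}. B j t \<omega> = invj j \<sigma>)"
      proof
        assume "Xp t \<omega> = \<sigma>" thus "\<forall>j\<in>{1..n}. B j t \<omega> = invj j \<sigma>" using G(2) by auto
      next
        assume h: "\<forall>j\<in>{1..n}. B j t \<omega> = invj j \<sigma>"
        have "Xp t \<omega> = Phi n (\<lambda>j. invj j \<sigma>)" unfolding Xp_def by (rule Phi_cong) (use h in auto)
        thus "Xp t \<omega> = \<sigma>" using Phi_code[OF s] by simp
      qed
      thus ?case by auto
    qed
  qed
  also have "\<dots> = (\<Prod>j\<in>{1..n}. prob {\<omega>\<in>space M. B j t \<omega> = invj j \<sigma>})"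
    by (rule prod_Fs) (rule ev_Fs[OF t])
  also have "\<dots> = (\<Prod>j\<in>{1..n}. t ^ invj j \<sigma> / Zp j t)"
  proof (rule prod.cong[OF refl])
    fix j assume j: "j \<in> {1..n}"
    show "prob {\<omega>\<in>space M. B j t \<omega> = invj j \<sigma>} = t ^ invj j \<sigma> / Zp j t"
      by (rule bp.marg[OF bpj[OF j] t invj_le])
  qed
  also have "\<dots> = t ^ Inv n \<sigma> / (\<Prod>k\<in>{1..n}. \<Sum>l<k. t ^ l)"
    by (simp add: prod_dividef Inv_def power_sum Zp_def)
  finally show ?thesis unfolding mallows_def .
qed

lemma meas_inv: "(\<lambda>\<omega>. f (Xp t \<omega>)) \<in> measurable M (count_space UNIV)"
  by (rule measurable_compose[OF measX measurable_count_space])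

lemma Good_path:
  assumes "Good \<omega>" "j \<in> {1..n}"
  shows "restrict (\<lambda>t. invj j (Xp t \<omega>)) {0..} = path j \<omega>"
  unfolding path_def
proof (rule restrict_ext)
  fix t :: real assume "t \<in> {0..}"
  thus "invj j (Xp t \<omega>) = B j t \<omega>" using Good_X(2)[OF assms(1), of t] assms(2) by auto
qed

lemma indep_inv: "indep_vars (\<lambda>_. NN) (\<lambda>j \<omega>. restrict (\<lambda>t. invj j (Xp t \<omega>)) {0..}) {1..n}"
proof -
  define Y where "Y j \<omega> = restrict (\<lambda>t. invj j (Xp t \<omega>)) {0..}" for j \<omega>
  have mY: "Y j \<in> measurable M NN" for j
    unfolding Y_def by (rule measurable_restrict) (rule meas_inv)
  have mP: "path j \<in> measurable M NN" if "j \<in> {1..n}" for j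
    using ind that unfolding indep_vars_def path_def by auto
  have eqAE: "AE \<omega> in M. \<forall>j\<in>{1..n}. Y j \<omega> = path j \<omega>"
    using AE_Good by eventually_elim (unfold Y_def, intro ballI Good_path)
  have "indep_sets (\<lambda>i. {Y i -` A \<inter> space M | A. A \<in> sets NN}) {1..n}"
  proof (rule indep_setsI)
    fix i assume "i \<in> {1..n}"
    show "{Y i -` A \<inter> space M | A. A \<in> sets NN} \<subseteq> events" using mY[of i] by (auto intro: measurable_sets)
  next
    fix A J assume J: "J \<noteq> {}" "J \<subseteq> {1..n}" "finite J" and A: "\<forall>j\<in>J. A j \<in> {Y j -` A \<inter> space M | A. A \<in> sets NN}"
    hence "\<forall>j\<in>J. \<exists>S. A j = Y j -` S \<inter> space M \<and> S \<in> sets NN" by blast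
    from bchoice[OF this] obtain S where S: "\<forall>j\<in>J. A j = Y j -` S j \<inter> space M \<and> S j \<in> sets NN" by blast
    define A' where "A' j = path j -` S j \<inter> space M" for j
    have evA: "A j \<in> events" if "j \<in> J" for j using S that mY[of j] by (auto intro: measurable_sets)
    have evA': "A' j \<in> events" if "j \<in> J" for j
    proof -
      have "j \<in> {1..n}" using that J by auto
      from measurable_sets[OF mP[OF this]] show ?thesis using S that unfolding A'_def by blast
    qed
    have AEj: "AE \<omega> in M. \<forall>j\<in>J. (\<omega> \<in> A j) = (\<omega> \<in> A' j)"
      using eqAE
    proof eventually_elim
      case (elim \<omega>)
      show ?case
      proof
        fix j assume j: "j \<in> J"
        hence "Y j \<omega> = path j \<omega>" using elim J by blast
        thus "(\<omega> \<in> A j) = (\<omega> \<in> A' j)" using S j unfolding A'_def by simp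
      qed
    qed
    have "prob (\<Inter>j\<in>J. A j) = prob (\<Inter>j\<in>J. A' j)"
    proof (rule finite_measure_eq_AE)
      show "AE \<omega> in M. (\<omega> \<in> (\<Inter>j\<in>J. A j)) = (\<omega> \<in> (\<Inter>j\<in>J. A' j))" using AEj by eventually_elim auto
      show "(\<Inter>j\<in>J. A j) \<in> events" using evA J by auto
      show "(\<Inter>j\<in>J. A' j) \<in> events" using evA' J by auto
    qed
    also have "\<dots> = (\<Prod>j\<in>J. prob (A' j))"
      unfolding A'_def path_def by (rule indep_varsD[OF ind J(1,3,2)]) (use S in auto)
    also have "\<dots> = (\<Prod>j\<in>J. prob (A j))"
    proof (rule prod.cong[OF refl])
      fix j assume j: "j \<in> J"
      show "prob (A' j) = prob (A j)"
      proof (rule finite_measure_eq_AE)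
        show "AE \<omega> in M. (\<omega> \<in> A' j) = (\<omega> \<in> A j)" using AEj by eventually_elim (use j in blast)
      qed (use j evA evA' in auto)
    qed
    finally show "prob (\<Inter>j\<in>J. A j) = (\<Prod>j\<in>J. prob (A j))" .
  qed
  thus ?thesis unfolding indep_vars_def2 Y_def[symmetric] using mY by auto
qed

lemma mono_inv:
  assumes j: "j \<in> {1..n}"
  shows "AE \<omega> in M. mono_on {0..} (\<lambda>t. invj j (Xp t \<omega>))"
  using AE_Good
proof eventually_elim
  case (elim \<omega>)
  have m: "mono_on {0..} (\<lambda>t. B j t \<omega>)" using elim j unfolding Good_def by blast
  show ?case
  proof (rule mono_onI)
    fix r s :: real assume "r \<in> {0..}" "s \<in> {0..}" "r \<le> s"
    moreover have "invj j (Xp r \<omega>) = B j r \<omega>" "invj j (Xp s \<omega>) = B j s \<omega>"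
      using Good_X(2)[OF elim] j calculation by auto
    ultimately show "invj j (Xp r \<omega>) \<le> invj j (Xp s \<omega>)" using mono_onD[OF m] by simp
  qed
qed

lemma mallows_ok: "mallows_process M n Xp"
  unfolding mallows_process_def
proof (intro conjI allI impI ballI)
  show "Xp t \<in> measurable M (count_space UNIV)" for t by (rule measX)
  show "AE \<omega> in M. \<forall>t\<ge>0. Xp t \<omega> \<in> Sn n" using AE_Good by eventually_elim (auto dest: Good_X)
  show "AE \<omega> in M. cadlag (\<lambda>t. Xp t \<omega>)" using AE_Good by eventually_elim (rule Good_cadlag)
  fix t :: real and \<sigma> assume "0 \<le> t" "\<sigma> \<in> Sn n"
  thus "prob {\<omega>\<in>space M. Xp t \<omega> = \<sigma>} = mallows n t \<sigma>" by (rule dist_X)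
qed

end


lemma comb_jump:
  fixes x y :: "nat \<Rightarrow> nat"
  assumes J: "finite J" and le: "\<forall>j\<in>J. y j \<le> x j" and s: "(\<Sum>j\<in>J. y j) + 2 \<le> (\<Sum>j\<in>J. x j)"
  shows "(\<exists>j\<in>J. y j + 2 \<le> x j) \<or> (\<exists>j1\<in>J. \<exists>j2\<in>J. j1 \<noteq> j2 \<and> y j1 \<noteq> x j1 \<and> y j2 \<noteq> x j2)"
proof (rule ccontr)
  assume "\<not> ?thesis"
  hence a: "\<forall>j\<in>J. x j < y j + 2" and b: "\<forall>j1\<in>J. \<forall>j2\<in>J. y j1 \<noteq> x j1 \<longrightarrow> y j2 \<noteq> x j2 \<longrightarrow> j1 = j2"
    by (auto simp: not_le)
  define D where "D = {j\<in>J. y j \<noteq> x j}"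
  have cD: "card D \<le> 1"
  proof -
    have "\<forall>a\<in>D. \<forall>b\<in>D. a = b" using b unfolding D_def by blast
    thus ?thesis using card_le_Suc0_iff_eq[of D] J unfolding D_def by auto
  qed
  have "(\<Sum>j\<in>J. x j) = (\<Sum>j\<in>J. y j + (x j - y j))" using le by (intro sum.cong) auto
  also have "\<dots> = (\<Sum>j\<in>J. y j) + (\<Sum>j\<in>J. x j - y j)" by (simp add: sum.distrib)
  also have "(\<Sum>j\<in>J. x j - y j) = (\<Sum>j\<in>D. x j - y j)"
    by (rule sum.mono_neutral_right) (use J in \<open>auto simp: D_def\<close>)
  also have "\<dots> \<le> (\<Sum>j\<in>D. 1)" using a unfolding D_def by (intro sum_mono) auto
  also have "\<dots> = card D" by simp
  finally show False using s cD by linarith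
qed

context mp begin

lemma ev2_Fs:
  assumes "s \<ge> 0" "t \<ge> 0"
  shows "{\<omega>\<in>space M. P (B j s \<omega>) (B j t \<omega>)} \<in> Fs j"
proof -
  interpret F: sigma_algebra "space M" "Fs j" by (rule Fs_sa)
  have "{\<omega>\<in>space M. P (B j s \<omega>) (B j t \<omega>)} = (\<Union>ab\<in>{ab. P (fst ab) (snd ab)}. {\<omega>\<in>space M. B j s \<omega> = fst ab} \<inter> {\<omega>\<in>space M. B j t \<omega> = snd ab})"
    by auto
  also have "\<dots> \<in> Fs j"
    by (intro F.countable_UN'' F.Int ev_Fs assms) auto
  finally show ?thesis .
qed

lemma ev2: "j \<in> {1..n} \<Longrightarrow> {\<omega>\<in>space M. P (B j s \<omega>) (B j t \<omega>)} \<in> events"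
  by (rule bp.ev2[OF bpj])

lemma pair_indep:
  assumes j: "j1 \<in> {1..n}" "j2 \<in> {1..n}" "j1 \<noteq> j2" and E: "E1 \<in> Fs j1" "E2 \<in> Fs j2"
  shows "prob (E1 \<inter> E2) = prob E1 * prob E2"
proof -
  define E where "E j = (if j = j1 then E1 else if j = j2 then E2 else space M)" for j
  have EF: "E j \<in> Fs j" if "j \<in> {1..n}" for j
    using E unfolding E_def Fs_def by (auto intro: sigma_sets_top)
  have s1: "E1 \<subseteq> space M" "E2 \<subseteq> space M" using Fs_sub[OF j(1)] Fs_sub[OF j(2)] E sets.sets_into_space by blast+
  have "space M \<inter> (\<Inter>j\<in>{1..n}. E j) = E1 \<inter> E2"
  proof (intro equalityI subsetI)
    fix x assume "x \<in> space M \<inter> (\<Inter>j\<in>{1..n}. E j)"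
    hence "x \<in> E j1" "x \<in> E j2" using j by auto
    thus "x \<in> E1 \<inter> E2" using j unfolding E_def by auto
  next
    fix x assume "x \<in> E1 \<inter> E2"
    thus "x \<in> space M \<inter> (\<Inter>j\<in>{1..n}. E j)" using s1 unfolding E_def by auto
  qed
  hence "prob (E1 \<inter> E2) = (\<Prod>j\<in>{1..n}. prob (E j))" using prod_Fs[OF EF] by simp
  also have "{1..n} = insert j1 (insert j2 ({1..n} - {j1, j2}))" using j by auto
  also have "(\<Prod>j\<in>insert j1 (insert j2 ({1..n} - {j1, j2})). prob (E j)) = prob E1 * prob E2 * (\<Prod>j\<in>{1..n} - {j1, j2}. prob (E j))"
    using j by (simp add: E_def)
  also have "(\<Prod>j\<in>{1..n} - {j1, j2}. prob (E j)) = 1"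
    by (rule prod.neutral) (auto simp: E_def prob_space)
  finally show ?thesis by simp
qed

lemma K_all: "\<exists>K\<ge>0. \<forall>j\<in>{1..n}. \<forall>a b. 0 \<le> a \<longrightarrow> a \<le> b \<longrightarrow> b \<le> T \<longrightarrow>
     prob {\<omega>\<in>space M. B j a \<omega> \<noteq> B j b \<omega>} \<le> K * (b - a) \<and>
     prob {\<omega>\<in>space M. B j a \<omega> + 2 \<le> B j b \<omega>} \<le> K * (b - a)^2"
proof -
  have "\<forall>j\<in>{1..n}. \<exists>K\<ge>0. \<forall>a b. 0 \<le> a \<longrightarrow> a \<le> b \<longrightarrow> b \<le> T \<longrightarrow>
     prob {\<omega>\<in>space M. B j a \<omega> \<noteq> B j b \<omega>} \<le> K * (b - a) \<and>
     prob {\<omega>\<in>space M. B j a \<omega> + 2 \<le> B j b \<omega>} \<le> K * (b - a)^2"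
    using bp.incr_K[OF bpj] by blast
  from bchoice[OF this] obtain Kf where Kf: "\<forall>j\<in>{1..n}. Kf j \<ge> 0 \<and> (\<forall>a b. 0 \<le> a \<longrightarrow> a \<le> b \<longrightarrow> b \<le> T \<longrightarrow>
     prob {\<omega>\<in>space M. B j a \<omega> \<noteq> B j b \<omega>} \<le> Kf j * (b - a) \<and>
     prob {\<omega>\<in>space M. B j a \<omega> + 2 \<le> B j b \<omega>} \<le> Kf j * (b - a)^2)" by blast
  define K where "K = (\<Sum>j\<in>{1..n}. Kf j)"
  have KK: "Kf j \<le> K" if "j \<in> {1..n}" for j
    unfolding K_def by (rule member_le_sum) (use Kf that in auto)
  have "\<forall>j\<in>{1..n}. \<forall>a b. 0 \<le> a \<longrightarrow> a \<le> b \<longrightarrow> b \<le> T \<longrightarrow>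
     prob {\<omega>\<in>space M. B j a \<omega> \<noteq> B j b \<omega>} \<le> K * (b - a) \<and>
     prob {\<omega>\<in>space M. B j a \<omega> + 2 \<le> B j b \<omega>} \<le> K * (b - a)^2"
  proof (intro ballI allI impI)
    fix j a b assume j: "j \<in> {1..n}" and ab: "0 \<le> a" "a \<le> b" "b \<le> T"
    have h: "b - a \<ge> 0" "(b - a)^2 \<ge> 0" using ab by auto
    have "Kf j * (b - a) \<le> K * (b - a)" "Kf j * (b - a)^2 \<le> K * (b - a)^2"
      using KK[OF j] h by (auto intro: mult_right_mono)
    thus "prob {\<omega>\<in>space M. B j a \<omega> \<noteq> B j b \<omega>} \<le> K * (b - a) \<and>
     prob {\<omega>\<in>space M. B j a \<omega> + 2 \<le> B j b \<omega>} \<le> K * (b - a)^2" using Kf j ab by fastforce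
  qed
  moreover have "K \<ge> 0" unfolding K_def using Kf by (auto intro: sum_nonneg)
  ultimately show ?thesis by blast
qed

definition gr :: "nat \<Rightarrow> nat \<Rightarrow> real" where "gr m i = real i / real m"
definition D1 where "D1 j m i = {\<omega>\<in>space M. B j (gr m i) \<omega> + 2 \<le> B j (gr m (Suc i)) \<omega>}"
definition D2 where "D2 j m i = {\<omega>\<in>space M. B j (gr m i) \<omega> \<noteq> B j (gr m (Suc i)) \<omega>}"
definition Gs where "Gs N m = (\<Union>i\<in>{..<N*m}. (\<Union>j\<in>{1..n}. D1 j m i) \<union> (\<Union>j1\<in>{1..n}. \<Union>j2\<in>{1..n}-{j1}. D2 j1 m i \<inter> D2 j2 m i))"

lemma D_ev: "j \<in> {1..n} \<Longrightarrow> D1 j m i \<in> events" "j \<in> {1..n} \<Longrightarrow> D2 j m i \<in> events"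
  unfolding D1_def D2_def by (rule ev2, simp)+

lemma Gs_ev: "Gs N m \<in> events"
  unfolding Gs_def using D_ev by (auto intro!: sets.finite_UN sets.Un sets.Int)

lemma Gs_bound:
  shows "\<exists>C\<ge>0. \<forall>m\<ge>1. prob (Gs N m) \<le> C / real m"
proof -
  obtain K where K: "K \<ge> 0" "\<forall>j\<in>{1..n}. \<forall>a b. 0 \<le> a \<longrightarrow> a \<le> b \<longrightarrow> b \<le> real N \<longrightarrow>
     prob {\<omega>\<in>space M. B j a \<omega> \<noteq> B j b \<omega>} \<le> K * (b - a) \<and>
     prob {\<omega>\<in>space M. B j a \<omega> + 2 \<le> B j b \<omega>} \<le> K * (b - a)^2" using K_all[of "real N"] by blast
  define C where "C = real N * (real n * K + real n * real n * (K * K))"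
  have C0: "C \<ge> 0" unfolding C_def using K by simp
  have "prob (Gs N m) \<le> C / real m" if m: "m \<ge> 1" for m
  proof -
    define h where "h = 1 / real m"
    have h0: "h \<ge> 0" unfolding h_def by simp
    have gr: "0 \<le> gr m i" "gr m i \<le> gr m (Suc i)" "gr m (Suc i) - gr m i = h" for i
      unfolding gr_def h_def using m by (auto simp: divide_right_mono diff_divide_distrib[symmetric])
    have grN: "gr m (Suc i) \<le> real N" if "i < N * m" for i
    proof -
      have "Suc i \<le> N * m" using that by simp
      hence "real (Suc i) \<le> real N * real m" by (metis of_nat_le_iff of_nat_mult)
      thus ?thesis unfolding gr_def using m by (simp add: divide_le_eq)
    qed
    have b1: "prob (D1 j m i) \<le> K * h^2" if "j \<in> {1..n}" "i < N * m" for j i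
    proof -
      note k = K(2)[rule_format, OF that(1) gr(1)[of i] gr(2)[of i] grN[OF that(2)]]
      thus ?thesis unfolding D1_def gr(3) by (rule conjunct2)
    qed
    have b2: "prob (D2 j m i) \<le> K * h" if "j \<in> {1..n}" "i < N * m" for j i
    proof -
      note k = K(2)[rule_format, OF that(1) gr(1)[of i] gr(2)[of i] grN[OF that(2)]]
      thus ?thesis unfolding D2_def gr(3) by (rule conjunct1)
    qed
    have b12: "prob (D2 j1 m i \<inter> D2 j2 m i) \<le> K * h * (K * h)" if "j1 \<in> {1..n}" "j2 \<in> {1..n}-{j1}" "i < N * m" for j1 j2 i
    proof -
      have "prob (D2 j1 m i \<inter> D2 j2 m i) = prob (D2 j1 m i) * prob (D2 j2 m i)"
        by (rule pair_indep[of j1 j2]) (use that in \<open>auto simp: D2_def intro: ev2_Fs gr\<close>)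
      also have "\<dots> \<le> K * h * (K * h)" using b2[of j1 i] b2[of j2 i] that K(1) h0 by (intro mult_mono) auto
      finally show ?thesis .
    qed
    have "prob (Gs N m) \<le> (\<Sum>i\<in>{..<N*m}. prob ((\<Union>j\<in>{1..n}. D1 j m i) \<union> (\<Union>j1\<in>{1..n}. \<Union>j2\<in>{1..n}-{j1}. D2 j1 m i \<inter> D2 j2 m i)))"
      unfolding Gs_def by (rule measure_UNION_le) (use D_ev in \<open>auto intro!: sets.finite_UN sets.Un sets.Int\<close>)
    also have "\<dots> \<le> (\<Sum>i\<in>{..<N*m}. real n * (K * h^2) + real n * real n * (K * h * (K * h)))"
    proof (rule sum_mono)
      fix i assume i: "i \<in> {..<N*m}"
      have "prob ((\<Union>j\<in>{1..n}. D1 j m i) \<union> (\<Union>j1\<in>{1..n}. \<Union>j2\<in>{1..n}-{j1}. D2 j1 m i \<inter> D2 j2 m i))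
          \<le> prob (\<Union>j\<in>{1..n}. D1 j m i) + prob (\<Union>j1\<in>{1..n}. \<Union>j2\<in>{1..n}-{j1}. D2 j1 m i \<inter> D2 j2 m i)"
        by (rule measure_Un_le) (use D_ev in \<open>auto intro!: sets.finite_UN sets.Int\<close>)
      also have "prob (\<Union>j\<in>{1..n}. D1 j m i) \<le> (\<Sum>j\<in>{1..n}. prob (D1 j m i))"
        by (rule measure_UNION_le) (use D_ev in auto)
      also have "\<dots> \<le> (\<Sum>j\<in>{1..n}. K * h^2)" using b1 i by (intro sum_mono) auto
      also have "prob (\<Union>j1\<in>{1..n}. \<Union>j2\<in>{1..n}-{j1}. D2 j1 m i \<inter> D2 j2 m i)
          \<le> (\<Sum>j1\<in>{1..n}. prob (\<Union>j2\<in>{1..n}-{j1}. D2 j1 m i \<inter> D2 j2 m i))"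
        by (rule measure_UNION_le) (use D_ev in \<open>auto intro!: sets.finite_UN sets.Int\<close>)
      also have "\<dots> \<le> (\<Sum>j1\<in>{1..n}. \<Sum>j2\<in>{1..n}-{j1}. prob (D2 j1 m i \<inter> D2 j2 m i))"
        by (intro sum_mono measure_UNION_le) (use D_ev in \<open>auto intro!: sets.Int\<close>)
      also have "\<dots> \<le> (\<Sum>j1\<in>{1..n}. \<Sum>j2\<in>{1..n}-{j1}. K * h * (K * h))"
        using b12 i by (intro sum_mono) auto
      also have "\<dots> \<le> (\<Sum>j1\<in>{1..n}. \<Sum>j2\<in>{1..n}. K * h * (K * h))"
        using K h0 by (intro sum_mono sum_mono2) auto
      finally show "prob ((\<Union>j\<in>{1..n}. D1 j m i) \<union> (\<Union>j1\<in>{1..n}. \<Union>j2\<in>{1..n}-{j1}. D2 j1 m i \<inter> D2 j2 m i))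
          \<le> real n * (K * h^2) + real n * real n * (K * h * (K * h))" by simp
    qed
    also have "\<dots> = real N * real m * (real n * (K * h^2) + real n * real n * (K * h * (K * h)))" by simp
    also have "\<dots> = C / real m" unfolding C_def h_def using m by (simp add: field_simps power2_eq_square)
    finally show ?thesis .
  qed
  thus ?thesis using C0 by blast
qed

lemma Hs_null: "(\<Inter>m. Gs N (Suc m)) \<in> null_sets M"
proof -
  have ev: "(\<Inter>m. Gs N (Suc m)) \<in> events" using Gs_ev by auto
  obtain C where C: "C \<ge> 0" "\<forall>m\<ge>1. prob (Gs N m) \<le> C / real m" using Gs_bound[of N] by blast
  have le: "prob (\<Inter>m. Gs N (Suc m)) \<le> C / real (Suc k)" for k
  proof -
    have "prob (\<Inter>m. Gs N (Suc m)) \<le> prob (Gs N (Suc k))" by (rule finite_measure_mono) (auto intro: Gs_ev)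
    also have "\<dots> \<le> C / real (Suc k)" using C by auto
    finally show ?thesis .
  qed
  have "prob (\<Inter>m. Gs N (Suc m)) = 0"
  proof (rule ccontr)
    assume "prob (\<Inter>m. Gs N (Suc m)) \<noteq> 0"
    hence p: "prob (\<Inter>m. Gs N (Suc m)) > 0" using measure_nonneg[of M] by (metis less_eq_real_def)
    obtain k where k: "C < real k * prob (\<Inter>m. Gs N (Suc m))" using ex_less_of_nat_mult[OF p] by blast
    have "prob (\<Inter>m. Gs N (Suc m)) * real (Suc k) \<le> C" using le[of k] by (simp add: field_simps)
    thus False using k p by (simp add: algebra_simps)
  qed
  thus ?thesis using ev by (simp add: null_sets_def emeasure_eq_measure)
qed

lemma path_jump:
  assumes G: "Good \<omega>" and w: "\<omega> \<in> space M" and t: "t > 0" "t \<le> real N" and m: "m \<ge> 1"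
    and big: "(\<Sum>j\<in>{1..n}. left_lim (\<lambda>u. B j u \<omega>) t) + 2 \<le> (\<Sum>j\<in>{1..n}. B j t \<omega>)"
  shows "\<omega> \<in> Gs N m"
proof -
  define c where "c = \<lceil>t * real m\<rceil>"
  have tm: "t * real m > 0" using t m by simp
  have c1: "c \<ge> 1" unfolding c_def using tm by (simp add: one_le_ceiling)
  define i where "i = nat (c - 1)"
  have ri: "real i = real_of_int c - 1" unfolding i_def using c1 by simp
  have rSi: "real (Suc i) = real_of_int c" using ri by simp
  have m0: "real m > 0" using m by simp
  have a_lt: "gr m i < t"
  proof -
    have "real_of_int c < t * real m + 1" unfolding c_def by linarith
    hence "real i < t * real m" using ri by simp
    thus ?thesis unfolding gr_def using m0 by (simp add: divide_less_eq)
  qed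
  have b_ge: "t \<le> gr m (Suc i)"
  proof -
    have "t * real m \<le> real_of_int c" unfolding c_def by simp
    thus ?thesis unfolding gr_def rSi using m0 by (simp add: le_divide_eq)
  qed
  have iN: "i < N * m"
  proof -
    have "t * real m \<le> real N * real m" using t m0 by simp
    hence "c \<le> int (N * m)" unfolding c_def by (simp add: ceiling_le_iff)
    thus ?thesis unfolding i_def using c1 by linarith
  qed
  have a0: "gr m i \<ge> 0" unfolding gr_def by simp
  define x where "x j = B j (gr m (Suc i)) \<omega>" for j
  define y where "y j = B j (gr m i) \<omega>" for j
  have Gj: "cadlag (\<lambda>u. B j u \<omega>)" "mono_on {0..} (\<lambda>u. B j u \<omega>)" if "j \<in> {1..n}" for j
    using G that unfolding Good_def by blast+
  have xt: "B j t \<omega> \<le> x j" if "j \<in> {1..n}" for j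
    unfolding x_def using mono_onD[OF Gj(2)[OF that]] t b_ge by auto
  have yl: "y j \<le> left_lim (\<lambda>u. B j u \<omega>) t" if j: "j \<in> {1..n}" for j
  proof -
    obtain e where e: "e > 0" "\<forall>u\<in>{t-e<..<t}. B j u \<omega> = left_lim (\<lambda>u. B j u \<omega>) t"
      using cadlag_left[OF Gj(1)[OF j] t(1)] by blast
    define u where "u = max (gr m i) (t - e / 2)"
    have u: "u \<in> {t-e<..<t}" "gr m i \<le> u" unfolding u_def using a_lt e by auto
    have "y j \<le> B j u \<omega>" unfolding y_def using mono_onD[OF Gj(2)[OF j]] a0 u by auto
    also have "B j u \<omega> = left_lim (\<lambda>u. B j u \<omega>) t" using e(2) u(1) by blast
    finally show ?thesis .
  qed
  have yx: "\<forall>j\<in>{1..n}. y j \<le> x j"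
    using yl xt mono_onD[OF Gj(2)] a0 a_lt b_ge unfolding x_def y_def by (meson atLeast_iff order.trans less_imp_le)
  have "(\<Sum>j\<in>{1..n}. y j) + 2 \<le> (\<Sum>j\<in>{1..n}. x j)"
  proof -
    have "(\<Sum>j\<in>{1..n}. y j) \<le> (\<Sum>j\<in>{1..n}. left_lim (\<lambda>u. B j u \<omega>) t)" using yl by (intro sum_mono) auto
    moreover have "(\<Sum>j\<in>{1..n}. B j t \<omega>) \<le> (\<Sum>j\<in>{1..n}. x j)" using xt by (intro sum_mono) auto
    ultimately show ?thesis using big by linarith
  qed
  from comb_jump[OF _ yx this] have
    "(\<exists>j\<in>{1..n}. y j + 2 \<le> x j) \<or> (\<exists>j1\<in>{1..n}. \<exists>j2\<in>{1..n}. j1 \<noteq> j2 \<and> y j1 \<noteq> x j1 \<and> y j2 \<noteq> x j2)"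
    by simp
  thus ?thesis
  proof
    assume "\<exists>j\<in>{1..n}. y j + 2 \<le> x j"
    then obtain j where "j \<in> {1..n}" "\<omega> \<in> D1 j m i" unfolding D1_def x_def y_def using w by blast
    thus ?thesis unfolding Gs_def using iN by blast
  next
    assume "\<exists>j1\<in>{1..n}. \<exists>j2\<in>{1..n}. j1 \<noteq> j2 \<and> y j1 \<noteq> x j1 \<and> y j2 \<noteq> x j2"
    then obtain j1 j2 where "j1 \<in> {1..n}" "j2 \<in> {1..n} - {j1}" "\<omega> \<in> D2 j1 m i" "\<omega> \<in> D2 j2 m i"
      unfolding D2_def x_def y_def using w by blast
    thus ?thesis unfolding Gs_def using iN by blast
  qed
qed

lemma Good_left_bound:
  assumes G: "Good \<omega>" and j: "j \<in> {1..n}" and t: "t > 0"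
  shows "left_lim (\<lambda>u. B j u \<omega>) t \<le> j - 1"
proof -
  have Gj: "cadlag (\<lambda>u. B j u \<omega>)" "\<forall>u\<ge>0. B j u \<omega> \<le> j - 1" using G j unfolding Good_def by blast+
  obtain e where e: "e > 0" "\<forall>u\<in>{t-e<..<t}. B j u \<omega> = left_lim (\<lambda>u. B j u \<omega>) t"
    using cadlag_left[OF Gj(1) t] by blast
  define u where "u = max (t / 2) (t - e / 2)"
  have u: "u \<in> {t-e<..<t}" "u \<ge> 0" unfolding u_def using t e by auto
  have "left_lim (\<lambda>u. B j u \<omega>) t = B j u \<omega>" using e(2) u(1) by metis
  also have "\<dots> \<le> j - 1" using Gj(2) u(2) by blast
  finally show ?thesis .
qed

lemma jump_AE: "AE \<omega> in M. \<forall>t>0. Inv n (Xp t \<omega>) \<le> Inv n (left_lim (\<lambda>u. Xp u \<omega>) t) + 1"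
proof -
  have "AE \<omega> in M. \<forall>N. \<omega> \<notin> (\<Inter>m. Gs N (Suc m))"
    unfolding AE_all_countable by (intro allI AE_not_in Hs_null)
  with AE_Good AE_space show ?thesis
  proof eventually_elim
    case (elim \<omega>)
    show ?case
    proof (intro allI impI)
      fix t :: real assume t: "t > 0"
      define cl where "cl j = left_lim (\<lambda>u. B j u \<omega>) t" for j
      have i1: "Inv n (Xp t \<omega>) = (\<Sum>j\<in>{1..n}. B j t \<omega>)"
        unfolding Inv_def using Good_X(2)[OF elim(1), of t] t by (intro sum.cong) auto
      have cb: "\<forall>j\<in>{1..n}. cl j \<le> j - 1" unfolding cl_def using Good_left_bound[OF elim(1) _ t] by blast
      have "left_lim (\<lambda>u. Xp u \<omega>) t = Phi n cl" unfolding cl_def using Good_cadlag(2)[OF elim(1) t] .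
      hence i2: "Inv n (left_lim (\<lambda>u. Xp u \<omega>) t) = (\<Sum>j\<in>{1..n}. cl j)"
        unfolding Inv_def using Phi_props(2)[OF cb] by (intro sum.cong) auto
      show "Inv n (Xp t \<omega>) \<le> Inv n (left_lim (\<lambda>u. Xp u \<omega>) t) + 1"
      proof (rule ccontr)
        assume "\<not> ?thesis"
        hence big: "(\<Sum>j\<in>{1..n}. left_lim (\<lambda>u. B j u \<omega>) t) + 2 \<le> (\<Sum>j\<in>{1..n}. B j t \<omega>)"
          unfolding i1 i2 cl_def by simp
        define N where "N = nat \<lceil>t\<rceil>"
        have tN: "t \<le> real N" unfolding N_def by linarith
        have "\<omega> \<in> Gs N (Suc m)" for m by (rule path_jump[OF elim(1) elim(2) t tN _ big]) simp
        hence "\<omega> \<in> (\<Inter>m. Gs N (Suc m))" by blast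
        thus False using elim(3) by blast
      qed
    qed
  qed
qed

end


context mp begin

definition Pp where "Pp s = {space M \<inter> (\<Inter>j\<in>{1..n}. A j) | A. \<forall>j\<in>{1..n}. A j \<in> nat_filt M (B j) s}"
definition Ea where "Ea s a = {\<omega>\<in>space M. \<forall>j\<in>{1..n}. B j s \<omega> = a j}"
definition Eab where "Eab s t a b = {\<omega>\<in>space M. \<forall>j\<in>{1..n}. B j s \<omega> = a j \<and> B j t \<omega> = b j}"
definition gg where "gg s t a b = (\<Prod>j\<in>{1..n}. birth_trans (prate j) s t (a j) (b j))"

lemma nf_ev: "j \<in> {1..n} \<Longrightarrow> s \<ge> 0 \<Longrightarrow> A \<in> nat_filt M (B j) s \<Longrightarrow> A \<in> events"
  using nat_filt_Fs Fs_sub by blast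

lemma Pp_ev: "s \<ge> 0 \<Longrightarrow> Pp s \<subseteq> events"
proof
  fix X assume s: "s \<ge> 0" and "X \<in> Pp s"
  then obtain A where X: "X = space M \<inter> (\<Inter>j\<in>{1..n}. A j)" "\<forall>j\<in>{1..n}. A j \<in> nat_filt M (B j) s"
    unfolding Pp_def by blast
  have "space M \<inter> (\<Inter>j\<in>{1..n}. A j) = {\<omega>\<in>space M. \<forall>j\<in>{1..n}. \<omega> \<in> A j}" by auto
  also have "\<dots> \<in> events"
    by (rule sets.Collect_finite_All) (use X(2) nf_ev s in \<open>auto intro: sets.Int\<close>)
  finally show "X \<in> events" using X by simp
qed

lemma Pp_stable: "Int_stable (Pp s)"
proof (rule Int_stableI)
  fix X Y assume "X \<in> Pp s" "Y \<in> Pp s"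
  then obtain A A' where X: "X = space M \<inter> (\<Inter>j\<in>{1..n}. A j)" "\<forall>j\<in>{1..n}. A j \<in> nat_filt M (B j) s"
    and Y: "Y = space M \<inter> (\<Inter>j\<in>{1..n}. A' j)" "\<forall>j\<in>{1..n}. A' j \<in> nat_filt M (B j) s"
    unfolding Pp_def by blast
  have "X \<inter> Y = space M \<inter> (\<Inter>j\<in>{1..n}. A j \<inter> A' j)" using X Y by auto
  moreover have "\<forall>j\<in>{1..n}. A j \<inter> A' j \<in> nat_filt M (B j) s"
  proof
    fix j assume j: "j \<in> {1..n}"
    interpret F: sigma_algebra "space M" "nat_filt M (B j) s"
      unfolding nat_filt_def by (rule sigma_algebra_sigma_sets) auto
    show "A j \<inter> A' j \<in> nat_filt M (B j) s" using X(2) Y(2) j by auto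
  qed
  ultimately show "X \<inter> Y \<in> Pp s" unfolding Pp_def by blast
qed

lemma space_Pp: "space M \<in> Pp s"
proof -
  have "space M = space M \<inter> (\<Inter>j\<in>{1..n}. (\<lambda>_. space M) j)" by auto
  moreover have "\<forall>j\<in>{1..n}. space M \<in> nat_filt M (B j) s" unfolding nat_filt_def by (auto intro: sigma_sets_top)
  ultimately show ?thesis unfolding Pp_def by blast
qed

context
  fixes s t :: real
  assumes st: "0 \<le> s" "s \<le> t"
begin

lemma t0: "0 \<le> t" using st by simp

lemma base:
  assumes "X \<in> Pp s"
  shows "prob (X \<inter> Eab s t a b) = prob (X \<inter> Ea s a) * gg s t a b"
proof -
  obtain A where X: "X = space M \<inter> (\<Inter>j\<in>{1..n}. A j)" "\<forall>j\<in>{1..n}. A j \<in> nat_filt M (B j) s"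
    using assms unfolding Pp_def by blast
  define E1 where "E1 j = A j \<inter> {\<omega>\<in>space M. B j s \<omega> = a j \<and> B j t \<omega> = b j}" for j
  define E0 where "E0 j = A j \<inter> {\<omega>\<in>space M. B j s \<omega> = a j}" for j
  have F1: "E1 j \<in> Fs j" if "j \<in> {1..n}" for j
  proof -
    interpret F: sigma_algebra "space M" "Fs j" by (rule Fs_sa)
    have "A j \<in> Fs j" using X(2) that nat_filt_Fs[OF st(1), of j] by blast
    moreover have "{\<omega>\<in>space M. B j s \<omega> = a j \<and> B j t \<omega> = b j} \<in> Fs j" by (rule ev2_Fs[OF st(1) t0])
    ultimately show ?thesis unfolding E1_def by (rule F.Int)
  qed
  have F0: "E0 j \<in> Fs j" if "j \<in> {1..n}" for j
  proof -
    interpret F: sigma_algebra "space M" "Fs j" by (rule Fs_sa)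
    have "A j \<in> Fs j" using X(2) that nat_filt_Fs[OF st(1), of j] by blast
    moreover have "{\<omega>\<in>space M. B j s \<omega> = a j} \<in> Fs j" by (rule ev_Fs[OF st(1)])
    ultimately show ?thesis unfolding E0_def by (rule F.Int)
  qed
  have e1: "X \<inter> Eab s t a b = space M \<inter> (\<Inter>j\<in>{1..n}. E1 j)" unfolding X E1_def Eab_def by auto
  have e0: "X \<inter> Ea s a = space M \<inter> (\<Inter>j\<in>{1..n}. E0 j)" unfolding X E0_def Ea_def by auto
  have "prob (X \<inter> Eab s t a b) = (\<Prod>j\<in>{1..n}. prob (E1 j))" unfolding e1 by (rule prod_Fs[OF F1])
  also have "\<dots> = (\<Prod>j\<in>{1..n}. prob (E0 j) * birth_trans (prate j) s t (a j) (b j))"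
  proof (rule prod.cong[OF refl])
    fix j assume j: "j \<in> {1..n}"
    have "A j \<in> nat_filt M (B j) s" using X(2) j by blast
    moreover have "birth_process M (B j) (prate j)" using bps j by blast
    ultimately show "prob (E1 j) = prob (E0 j) * birth_trans (prate j) s t (a j) (b j)"
      unfolding E1_def E0_def birth_process_def using st by blast
  qed
  also have "\<dots> = (\<Prod>j\<in>{1..n}. prob (E0 j)) * gg s t a b" unfolding gg_def by (rule prod.distrib)
  also have "(\<Prod>j\<in>{1..n}. prob (E0 j)) = prob (X \<inter> Ea s a)" unfolding e0 by (rule prod_Fs[OF F0, symmetric])
  finally show ?thesis .
qed

lemma Eab_ev: "Eab s t a b \<in> events"
  unfolding Eab_def by (rule sets.Collect_finite_All) (auto intro: ev2)
lemma Ea_ev: "Ea s a \<in> events"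
  unfolding Ea_def by (rule sets.Collect_finite_All) (auto intro: evB)

lemma dynkin:
  assumes "X \<in> sigma_sets (space M) (Pp s)"
  shows "prob (X \<inter> Eab s t a b) = prob (X \<inter> Ea s a) * gg s t a b"
proof -
  have sub: "Pp s \<subseteq> Pow (space M)" using Pp_ev[OF st(1)] sets.sets_into_space by blast
  from Pp_stable sub assms show ?thesis
proof (induction rule: sigma_sets_induct_disjoint)
  case (basic A) thus ?case by (rule base)
next
  case empty thus ?case by simp
next
  case (compl A)
  have Aev: "A \<in> events" using compl(1) sets.sigma_sets_subset[OF Pp_ev[OF st(1)]] by blast
  have "(space M - A) \<inter> Eab s t a b = Eab s t a b - (A \<inter> Eab s t a b)" unfolding Eab_def by auto
  hence "prob ((space M - A) \<inter> Eab s t a b) = prob (Eab s t a b) - prob (A \<inter> Eab s t a b)"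
    using Aev Eab_ev by (simp add: finite_measure_Diff)
  also have "(space M - A) \<inter> Ea s a = Ea s a - (A \<inter> Ea s a)" unfolding Ea_def by auto
  hence "prob ((space M - A) \<inter> Ea s a) = prob (Ea s a) - prob (A \<inter> Ea s a)"
    using Aev Ea_ev by (simp add: finite_measure_Diff)
  moreover have "prob (Eab s t a b) = prob (Ea s a) * gg s t a b"
    using base[OF space_Pp, of a b] Eab_ev Ea_ev sets.sets_into_space by (simp add: Int_absorb1)
  ultimately show ?case using compl(2) by (simp add: right_diff_distrib mult.commute)
next
  case (union A)
  have Aev: "\<And>i. A i \<in> events" using union(2) sets.sigma_sets_subset[OF Pp_ev[OF st(1)]] by blast
  have s1: "(\<lambda>i. prob (A i \<inter> Eab s t a b)) sums prob (\<Union>i. A i \<inter> Eab s t a b)"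
  proof (rule finite_measure_UNION)
    show "disjoint_family (\<lambda>i. A i \<inter> Eab s t a b)" using union(1) unfolding disjoint_family_on_def by blast
    show "range (\<lambda>i. A i \<inter> Eab s t a b) \<subseteq> events" using Aev Eab_ev by blast
  qed
  have s2: "(\<lambda>i. prob (A i \<inter> Ea s a)) sums prob (\<Union>i. A i \<inter> Ea s a)"
  proof (rule finite_measure_UNION)
    show "disjoint_family (\<lambda>i. A i \<inter> Ea s a)" using union(1) unfolding disjoint_family_on_def by blast
    show "range (\<lambda>i. A i \<inter> Ea s a) \<subseteq> events" using Aev Ea_ev by blast
  qed
  have "(\<lambda>i. prob (A i \<inter> Ea s a) * gg s t a b) sums (prob (\<Union>i. A i \<inter> Ea s a) * gg s t a b)"
    by (rule sums_mult2[OF s2])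
  hence s3: "(\<lambda>i. prob (A i \<inter> Eab s t a b)) sums (prob (\<Union>i. A i \<inter> Ea s a) * gg s t a b)"
    using union(3) by simp
  have "(\<Union>i. A i) \<inter> Eab s t a b = (\<Union>i. A i \<inter> Eab s t a b)" by blast
  hence "prob ((\<Union>i. A i) \<inter> Eab s t a b) = prob (\<Union>i. A i \<inter> Eab s t a b)" by simp
  also have "\<dots> = prob (\<Union>i. A i \<inter> Ea s a) * gg s t a b" by (rule sums_unique2[OF s1 s3])
  also have "(\<Union>i. A i \<inter> Ea s a) = (\<Union>i. A i) \<inter> Ea s a" by auto
  finally show ?case .
qed
qed

lemma Pp_pow: "Pp s \<subseteq> Pow (space M)" using Pp_ev[OF st(1)] sets.sets_into_space by blast

lemma nf_sub: "nat_filt M Xp s \<subseteq> sigma_sets (space M) (Pp s)"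
  unfolding nat_filt_def
proof (rule sigma_algebra.sigma_sets_subset[OF sigma_algebra_sigma_sets[OF Pp_pow]], safe)
  fix r C assume r: "0 \<le> r" "r \<le> s"
  define Cs where "Cs = PiE {1..n} (\<lambda>_. UNIV :: nat set) \<inter> {c. Phi n c \<in> C}"
  define Z where "Z c = space M \<inter> (\<Inter>j\<in>{1..n}. {\<omega>\<in>space M. B j r \<omega> = c j})" for c
  have eq: "Xp r -` C \<inter> space M = \<Union> (Z ` Cs)"
  proof (intro equalityI subsetI)
    fix \<omega> assume w: "\<omega> \<in> Xp r -` C \<inter> space M"
    define c where "c = restrict (\<lambda>j. B j r \<omega>) {1..n}"
    have "Phi n c = Xp r \<omega>" unfolding Xp_def c_def by (rule Phi_cong) simp
    hence "c \<in> Cs" using w unfolding Cs_def c_def by auto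
    moreover have "\<omega> \<in> Z c" using w unfolding Z_def c_def by auto
    ultimately show "\<omega> \<in> \<Union> (Z ` Cs)" by blast
  next
    fix \<omega> assume "\<omega> \<in> \<Union> (Z ` Cs)"
    then obtain c where c: "c \<in> Cs" "\<omega> \<in> Z c" by blast
    have "Xp r \<omega> = Phi n c" unfolding Xp_def by (rule Phi_cong) (use c in \<open>auto simp: Z_def\<close>)
    thus "\<omega> \<in> Xp r -` C \<inter> space M" using c unfolding Cs_def Z_def by auto
  qed
  have cnt: "countable (Z ` Cs)"
  proof -
    have "countable (PiE {1..n} (\<lambda>_. UNIV :: nat set))" by (rule countable_PiE) auto
    hence "countable Cs" unfolding Cs_def by (rule countable_subset[rotated]) auto
    thus ?thesis by simp
  qed
  have "Z c \<in> Pp s" for c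
  proof -
    have "\<forall>j\<in>{1..n}. {\<omega>\<in>space M. B j r \<omega> = c j} \<in> nat_filt M (B j) s"
    proof
      fix j assume j: "j \<in> {1..n}"
      have "{\<omega>\<in>space M. B j r \<omega> = c j} = B j r -` {c j} \<inter> space M" by auto
      thus "{\<omega>\<in>space M. B j r \<omega> = c j} \<in> nat_filt M (B j) s"
        unfolding nat_filt_def using r by (auto intro!: sigma_sets.Basic)
    qed
    thus ?thesis unfolding Pp_def Z_def by blast
  qed
  hence "\<Union> (Z ` Cs) \<in> sigma_sets (space M) (Pp s)"
    by (intro sigma_sets_UNION[OF cnt]) (auto intro: sigma_sets.Basic)
  thus "Xp r -` C \<inter> space M \<in> sigma_sets (space M) (Pp s)" unfolding eq .
qed

lemma sig_ev: "X \<in> sigma_sets (space M) (Pp s) \<Longrightarrow> X \<in> events"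
  using sets.sigma_sets_subset[OF Pp_ev[OF st(1)]] by blast

lemma part_i:
  assumes X: "X \<in> sigma_sets (space M) (Pp s)" and x: "x \<in> Sn n"
  shows "prob (X \<inter> {\<omega>\<in>space M. Xp s \<omega> = x}) = prob (X \<inter> Ea s (\<lambda>j. invj j x))"
proof (rule finite_measure_eq_AE)
  show "X \<inter> {\<omega>\<in>space M. Xp s \<omega> = x} \<in> events" using sig_ev[OF X] evX by auto
  show "X \<inter> Ea s (\<lambda>j. invj j x) \<in> events" using sig_ev[OF X] Ea_ev by auto
  from AE_Good show "AE \<omega> in M. (\<omega> \<in> X \<inter> {\<omega>\<in>space M. Xp s \<omega> = x}) = (\<omega> \<in> X \<inter> Ea s (\<lambda>j. invj j x))"
  proof eventually_elim
    case (elim \<omega>)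
    note G = Good_X[OF elim st(1)]
    have "Xp s \<omega> = x \<longleftrightarrow> (\<forall>j\<in>{1..n}. B j s \<omega> = invj j x)"
    proof
      assume "Xp s \<omega> = x" thus "\<forall>j\<in>{1..n}. B j s \<omega> = invj j x" using G(2) by auto
    next
      assume h: "\<forall>j\<in>{1..n}. B j s \<omega> = invj j x"
      have "Xp s \<omega> = Phi n (\<lambda>j. invj j x)" unfolding Xp_def by (rule Phi_cong) (use h in auto)
      thus "Xp s \<omega> = x" using Phi_code[OF x] by simp
    qed
    thus ?case unfolding Ea_def by auto
  qed
qed

definition Bs where "Bs y = {b \<in> PiE {1..n} (\<lambda>j. {..<j}). Phi n b = y}"

lemma part_ii:
  assumes X: "X \<in> sigma_sets (space M) (Pp s)" and x: "x \<in> Sn n"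
  shows "prob (X \<inter> {\<omega>\<in>space M. Xp s \<omega> = x \<and> Xp t \<omega> = y}) = prob (X \<inter> Ea s (\<lambda>j. invj j x)) * (\<Sum>b\<in>Bs y. gg s t (\<lambda>j. invj j x) b)"
proof -
  define a where "a = (\<lambda>j. invj j x)"
  have Xev: "X \<in> events" by (rule sig_ev[OF X])
  have finB: "finite (Bs y)"
  proof (rule finite_subset)
    show "Bs y \<subseteq> PiE {1..n} (\<lambda>j. {..<j})" unfolding Bs_def by blast
    show "finite (PiE {1..n} (\<lambda>j. {..<j::nat}))" by (rule finite_PiE) auto
  qed
  have "prob (X \<inter> {\<omega>\<in>space M. Xp s \<omega> = x \<and> Xp t \<omega> = y}) = prob (\<Union>b\<in>Bs y. X \<inter> Eab s t a b)"
  proof (rule finite_measure_eq_AE)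
    show "X \<inter> {\<omega>\<in>space M. Xp s \<omega> = x \<and> Xp t \<omega> = y} \<in> events"
    proof -
      have "{\<omega>\<in>space M. Xp s \<omega> = x \<and> Xp t \<omega> = y} = {\<omega>\<in>space M. Xp s \<omega> = x} \<inter> {\<omega>\<in>space M. Xp t \<omega> = y}" by auto
      thus ?thesis using Xev evX by auto
    qed
    show "(\<Union>b\<in>Bs y. X \<inter> Eab s t a b) \<in> events" using finB Xev Eab_ev by auto
    from AE_Good show "AE \<omega> in M. (\<omega> \<in> X \<inter> {\<omega>\<in>space M. Xp s \<omega> = x \<and> Xp t \<omega> = y}) = (\<omega> \<in> (\<Union>b\<in>Bs y. X \<inter> Eab s t a b))"
    proof eventually_elim
      case (elim \<omega>)
      note Gs' = Good_X[OF elim st(1)]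
      note Gt = Good_X[OF elim t0]
      show ?case
      proof
        assume w: "\<omega> \<in> X \<inter> {\<omega>\<in>space M. Xp s \<omega> = x \<and> Xp t \<omega> = y}"
        define b where "b = restrict (\<lambda>j. B j t \<omega>) {1..n}"
        have bl: "\<forall>j\<in>{1..n}. B j t \<omega> < j"
        proof
          fix j assume j: "j \<in> {1..n}"
          have "B j t \<omega> \<le> j - 1" using elim j t0 unfolding Good_def by blast
          thus "B j t \<omega> < j" using j by auto
        qed
        have "Phi n b = Xp t \<omega>" unfolding Xp_def b_def by (rule Phi_cong) simp
        hence "b \<in> Bs y" using w bl unfolding Bs_def b_def by auto
        moreover have "\<omega> \<in> Eab s t a b" using w Gs'(2) unfolding Eab_def a_def b_def by auto
        ultimately show "\<omega> \<in> (\<Union>b\<in>Bs y. X \<inter> Eab s t a b)" using w by blast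
      next
        assume "\<omega> \<in> (\<Union>b\<in>Bs y. X \<inter> Eab s t a b)"
        then obtain b where b: "b \<in> Bs y" "\<omega> \<in> X" "\<omega> \<in> Eab s t a b" by blast
        have "Xp s \<omega> = Phi n a" unfolding Xp_def by (rule Phi_cong) (use b in \<open>auto simp: Eab_def\<close>)
        hence xs: "Xp s \<omega> = x" using Phi_code[OF x] unfolding a_def by simp
        have "Xp t \<omega> = Phi n b" unfolding Xp_def by (rule Phi_cong) (use b in \<open>auto simp: Eab_def\<close>)
        hence "Xp t \<omega> = y" using b unfolding Bs_def by simp
        thus "\<omega> \<in> X \<inter> {\<omega>\<in>space M. Xp s \<omega> = x \<and> Xp t \<omega> = y}" using xs b unfolding Eab_def by auto
      qed
    qed
  qed
  also have "\<dots> = (\<Sum>b\<in>Bs y. prob (X \<inter> Eab s t a b))"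
  proof (rule measure_finite_Union[OF finB])
    show "(\<lambda>b. X \<inter> Eab s t a b) ` Bs y \<subseteq> events" using Xev Eab_ev by auto
    show "disjoint_family_on (\<lambda>b. X \<inter> Eab s t a b) (Bs y)"
      unfolding disjoint_family_on_def
    proof (intro ballI impI)
      fix b b' assume bb: "b \<in> Bs y" "b' \<in> Bs y" "b \<noteq> b'"
      have p: "b \<in> PiE {1..n} (\<lambda>j. {..<j})" "b' \<in> PiE {1..n} (\<lambda>j. {..<j})" using bb(1,2) unfolding Bs_def by blast+
      have "\<not> (\<forall>j\<in>{1..n}. b j = b' j)"
      proof
        assume "\<forall>j\<in>{1..n}. b j = b' j"
        hence "b = b'" using PiE_ext[OF p] by blast
        thus False using bb(3) by simp
      qed
      then obtain j where j: "j \<in> {1..n}" "b j \<noteq> b' j" by blast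
      show "X \<inter> Eab s t a b \<inter> (X \<inter> Eab s t a b') = {}" using j unfolding Eab_def by auto
    qed
    show "emeasure M (X \<inter> Eab s t a b) \<noteq> \<infinity>" for b by (simp add: emeasure_eq_measure)
  qed
  also have "\<dots> = (\<Sum>b\<in>Bs y. prob (X \<inter> Ea s a) * gg s t a b)"
    by (rule sum.cong[OF refl]) (rule dynkin[OF X])
  also have "\<dots> = prob (X \<inter> Ea s a) * (\<Sum>b\<in>Bs y. gg s t a b)" by (simp add: sum_distrib_left)
  finally show ?thesis unfolding a_def .
qed

lemma markov_st:
  assumes A: "A \<in> nat_filt M Xp s"
  shows "prob (A \<inter> {\<omega>\<in>space M. Xp s \<omega> = x \<and> Xp t \<omega> = y}) * prob {\<omega>\<in>space M. Xp s \<omega> = x}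
       = prob (A \<inter> {\<omega>\<in>space M. Xp s \<omega> = x}) * prob {\<omega>\<in>space M. Xp s \<omega> = x \<and> Xp t \<omega> = y}"
proof (cases "x \<in> Sn n")
  case False
  have "prob {\<omega>\<in>space M. Xp s \<omega> = x} \<le> prob {}"
  proof (rule finite_measure_mono_AE)
    from AE_Good show "AE \<omega> in M. \<omega> \<in> {\<omega>\<in>space M. Xp s \<omega> = x} \<longrightarrow> \<omega> \<in> {}"
      by eventually_elim (use Good_X(1)[OF _ st(1)] False in auto)
  qed simp
  hence z: "prob {\<omega>\<in>space M. Xp s \<omega> = x} = 0" using measure_nonneg[of M] by (simp add: order_antisym)
  have "prob {\<omega>\<in>space M. Xp s \<omega> = x \<and> Xp t \<omega> = y} \<le> prob {\<omega>\<in>space M. Xp s \<omega> = x}"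
    by (rule finite_measure_mono) (auto intro: evX)
  hence "prob {\<omega>\<in>space M. Xp s \<omega> = x \<and> Xp t \<omega> = y} = 0" using z measure_nonneg[of M] by (simp add: order_antisym)
  thus ?thesis using z by simp
next
  case True
  have A': "A \<in> sigma_sets (space M) (Pp s)" using A nf_sub by blast
  have S: "space M \<in> sigma_sets (space M) (Pp s)" by (rule sigma_sets_top)
  define G where "G = (\<Sum>b\<in>Bs y. gg s t (\<lambda>j. invj j x) b)"
  have 1: "prob (A \<inter> {\<omega>\<in>space M. Xp s \<omega> = x \<and> Xp t \<omega> = y}) = prob (A \<inter> Ea s (\<lambda>j. invj j x)) * G"
    unfolding G_def by (rule part_ii[OF A' True])
  have 2: "prob {\<omega>\<in>space M. Xp s \<omega> = x \<and> Xp t \<omega> = y} = prob (space M \<inter> Ea s (\<lambda>j. invj j x)) * G"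
    unfolding G_def using part_ii[OF S True] by (simp add: Int_absorb1)
  have 3: "prob (A \<inter> {\<omega>\<in>space M. Xp s \<omega> = x}) = prob (A \<inter> Ea s (\<lambda>j. invj j x))"
    by (rule part_i[OF A' True])
  have 4: "prob {\<omega>\<in>space M. Xp s \<omega> = x} = prob (space M \<inter> Ea s (\<lambda>j. invj j x))"
    using part_i[OF S True] by (simp add: Int_absorb1)
  show ?thesis unfolding 1 2 3 4 by simp
qed

end

lemma markov_ok: "markov_process M Xp"
  unfolding markov_process_def using measX markov_st by blast

end

theorem mainTheorem7:
  fixes M :: "'a measure" and n :: nat and B :: "nat \<Rightarrow> real \<Rightarrow> 'a \<Rightarrow> nat"
  assumes "prob_space M"
    and "\<forall>j\<in>{1..n}. birth_process M (B j) (prate j)"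
    and "prob_space.indep_vars M (\<lambda>_. Pi\<^sub>M {0..} (\<lambda>_. count_space UNIV))
           (\<lambda>j \<omega>. restrict (\<lambda>t. B j t \<omega>) {0..}) {1..n}"
  shows "regular_mallows_process M n (\<lambda>t \<omega>. Phi n (\<lambda>j. B j t \<omega>))
         \<and> markov_process M (\<lambda>t \<omega>. Phi n (\<lambda>j. B j t \<omega>))"
proof -
  interpret mp M n B
    using assms unfolding mp_def mp_axioms_def by auto
  have X: "(\<lambda>t \<omega>. Phi n (\<lambda>j. B j t \<omega>)) = Xp" unfolding Xp_def[abs_def] by simp
  show ?thesis unfolding X regular_mallows_process_def
    using mallows_ok mono_inv jump_AE indep_inv markov_ok by blast
qed

end
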